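(* Let $\Gamma$ be a connected signed graph such that $\Gamma_+$ is connected and $\Gamma_-$ has exactly two edges $e,f$, which do not share a vertex. Then \[ \mathcal{M}(\Gamma(t))=t^2|\gamma_e\gamma_f|\,\mathcal{M}(\Gamma_{.e.f})-t\big(|\gamma_e|\,\mathcal{M}(\Gamma_{.e\setminus f})+|\gamma_f|\,\mathcal{M}(\Gamma_{\setminus e.f})\big)+\mathcal{M}(\Gamma_{\setminus e\setminus f}), \] and $t^\star(\Gamma)$ is the minimal positive root of this polynomial.
   Context: A signed graph $\Gamma$ is a finite simple undirected graph with vertex set $\{1,\dots,N\}$ in which every edge $\{i,j\}$ carries a nonzero real weight $\gamma_{ij}$, which may be of either sign. $\Gamma_+$ (resp. $\Gamma_-$) is the spanning subgraph on all vertices containing exactly the positively (resp. negatively) weighted edges. For real $t$, $\Gamma(t)$ has the same edges and weights $\gamma_{ij}$ on positive edges and $t\gamma_{ij}$ on negative edges. For a weighted multigraph $H$ (loops and parallel edges allowed), $\mathcal{M}(H)=\sum_T\prod_{e\in E(T)}w(e)$, summed over spanning trees $T$ of $H$ (parallel edges give distinct trees; $\mathcal{M}(H)=0$ if $H$ is disconnected). For an edge $e$, $\Gamma_{\setminus e}$ is obtained by deleting $e$, and $\Gamma_{.e}$ is obtained by contracting $e$: its two endpoints are identified into one vertex, every other edge incident to either endpoint becomes incident to the new vertex (keeping its weight), and $e$ is removed. Compound symbols denote successive operations: $\Gamma_{.e.f}$ contract $e$ then $f$; $\Gamma_{.e\setminus f}$ contract $e$ and delete $f$; $\Gamma_{\setminus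 e.f}$ delete $e$ and contract $f$; $\Gamma_{\setminus e\setminus f}$ delete both. For a signed graph, $n_+(\cdot)$ denotes the number of positive eigenvalues of the Laplacian (off-diagonal entries the weights, diagonal entries minus the row sums), and $t^\star(\Gamma)=\sup\{t\ge0: n_+(\Gamma(t))=0\}$. *)

theory Defs
  imports Complex_Main "Jordan_Normal_Form.Char_Poly"
begin

section \<open>Weighted multigraphs (loops and parallel edges allowed)\<close>

record ('v,'e) wgraph =
  verts :: "'v set"
  arcs  :: "'e set"
  ends  :: "'e \<Rightarrow> 'v \<times> 'v"
  wt    :: "'e \<Rightarrow> real"

definition adj_rel :: "('v,'e) wgraph \<Rightarrow> 'e set \<Rightarrow> ('v \<times> 'v) set" where
  "adj_rel H T = {(a,b). \<exists>e\<in>T. ends H e = (a,b) \<or> ends H e = (b,a)}"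

definition joined :: "('v,'e) wgraph \<Rightarrow> 'e set \<Rightarrow> 'v \<Rightarrow> 'v \<Rightarrow> bool" where
  "joined H T u v \<longleftrightarrow> (u,v) \<in> (adj_rel H T)\<^sup>*"

definition connected_by :: "('v,'e) wgraph \<Rightarrow> 'e set \<Rightarrow> bool" where
  "connected_by H T \<longleftrightarrow> (\<forall>u\<in>verts H. \<forall>v\<in>verts H. joined H T u v)"

definition acyclic_edges :: "('v,'e) wgraph \<Rightarrow> 'e set \<Rightarrow> bool" where
  "acyclic_edges H T \<longleftrightarrow>
     (\<forall>e\<in>T. fst (ends H e) \<noteq> snd (ends H e) \<and>
             \<not> joined H (T - {e}) (fst (ends H e)) (snd (ends H e)))"

definition spanning_tree :: "('v,'e) wgraph \<Rightarrow> 'e set \<Rightarrow> bool" where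
  "spanning_tree H T \<longleftrightarrow> T \<subseteq> arcs H \<and> connected_by H T \<and> acyclic_edges H T"

definition tree_sum :: "('v,'e) wgraph \<Rightarrow> real" where
  "tree_sum H = (\<Sum>T\<in>{T. spanning_tree H T}. \<Prod>e\<in>T. wt H e)"

definition delete_edge :: "('v,'e) wgraph \<Rightarrow> 'e \<Rightarrow> ('v,'e) wgraph" where
  "delete_edge H e = H\<lparr>arcs := arcs H - {e}\<rparr>"

definition contract_edge :: "('v,'e) wgraph \<Rightarrow> 'e \<Rightarrow> ('v,'e) wgraph" where
  "contract_edge H e =
     (let m = (\<lambda>v. if v = snd (ends H e) then fst (ends H e) else v)
      in \<lparr>verts = m ` verts H, arcs = arcs H - {e},
          ends = map_prod m m \<circ> ends H, wt = wt H\<rparr>)"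

text \<open>gam i j = weight of edge {i,j}, 0 meaning no edge\<close>
definition signed_graph :: "nat \<Rightarrow> (nat \<Rightarrow> nat \<Rightarrow> real) \<Rightarrow> bool" where
  "signed_graph N gam \<longleftrightarrow> (\<forall>i j. gam i j = gam j i) \<and> (\<forall>i. gam i i = 0) \<and>
      (\<forall>i j. N \<le> i \<or> N \<le> j \<longrightarrow> gam i j = 0)"

definition sg_edges :: "nat \<Rightarrow> (nat \<Rightarrow> nat \<Rightarrow> real) \<Rightarrow> (nat \<times> nat) set" where
  "sg_edges N gam = {(i,j). i < j \<and> j < N \<and> gam i j \<noteq> 0}"

definition wt_t :: "(nat \<Rightarrow> nat \<Rightarrow> real) \<Rightarrow> real \<Rightarrow> nat \<Rightarrow> nat \<Rightarrow> real" where
  "wt_t gam t i j = (if gam i j > 0 then gam i j else t * gam i j)"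

definition sg_graph :: "nat \<Rightarrow> (nat \<Rightarrow> nat \<Rightarrow> real) \<Rightarrow> (nat, nat \<times> nat) wgraph" where
  "sg_graph N gam = \<lparr>verts = {..<N}, arcs = sg_edges N gam, ends = id,
                     wt = (\<lambda>(i,j). gam i j)\<rparr>"

definition sg_graph_t :: "nat \<Rightarrow> (nat \<Rightarrow> nat \<Rightarrow> real) \<Rightarrow> real \<Rightarrow> (nat, nat \<times> nat) wgraph" where
  "sg_graph_t N gam t = (sg_graph N gam)\<lparr>wt := (\<lambda>(i,j). wt_t gam t i j)\<rparr>"

definition pos_edges :: "nat \<Rightarrow> (nat \<Rightarrow> nat \<Rightarrow> real) \<Rightarrow> (nat \<times> nat) set" where
  "pos_edges N gam = {e \<in> sg_edges N gam. gam (fst e) (snd e) > 0}"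

definition neg_edges :: "nat \<Rightarrow> (nat \<Rightarrow> nat \<Rightarrow> real) \<Rightarrow> (nat \<times> nat) set" where
  "neg_edges N gam = {e \<in> sg_edges N gam. gam (fst e) (snd e) < 0}"

definition laplacian_t :: "nat \<Rightarrow> (nat \<Rightarrow> nat \<Rightarrow> real) \<Rightarrow> real \<Rightarrow> real mat" where
  "laplacian_t N gam t = mat N N (\<lambda>(i,j). if i = j then - (\<Sum>k<N. wt_t gam t i k)
                                           else wt_t gam t i j)"

definition n_plus :: "real mat \<Rightarrow> nat" where
  "n_plus A = (\<Sum>x\<in>{x. x > 0 \<and> poly (char_poly A) x = 0}. order x (char_poly A))"

definition t_star :: "nat \<Rightarrow> (nat \<Rightarrow> nat \<Rightarrow> real) \<Rightarrow> real" where
  "t_star N gam = Sup {t. t \<ge> 0 \<and> n_plus (laplacian_t N gam t) = 0}"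

end

theory Submission
  imports Defs
begin


lemma adj_rel_mono: "S \<subseteq> T \<Longrightarrow> adj_rel H S \<subseteq> adj_rel H T"
  unfolding adj_rel_def by auto

lemma joined_mono: "joined H S u v \<Longrightarrow> S \<subseteq> T \<Longrightarrow> joined H T u v"
  unfolding joined_def by (meson adj_rel_mono rtrancl_mono subsetD)

lemma joined_refl[simp]: "joined H S u u"
  unfolding joined_def by simp

lemma joined_trans: "joined H S u v \<Longrightarrow> joined H S v w \<Longrightarrow> joined H S u w"
  unfolding joined_def by (meson rtrancl_trans)

lemma adj_rel_sym: "(a,b) \<in> adj_rel H S \<Longrightarrow> (b,a) \<in> adj_rel H S"
  unfolding adj_rel_def by auto

lemma joined_sym: "joined H S u v \<Longrightarrow> joined H S v u"
  unfolding joined_def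
proof (induction rule: rtrancl_induct)
  case base then show ?case by simp
next
  case (step y z)
  then show ?case by (meson adj_rel_sym converse_rtrancl_into_rtrancl)
qed

lemma joined_edge: "g \<in> S \<Longrightarrow> ends H g = (c,d) \<Longrightarrow> joined H S c d"
  unfolding joined_def adj_rel_def by (rule r_into_rtrancl) auto

lemma joined_edge': "g \<in> S \<Longrightarrow> ends H g = (c,d) \<Longrightarrow> joined H S d c"
  using joined_edge joined_sym by metis

lemma joined_empty: "joined H {} u v \<Longrightarrow> u = v"
  unfolding joined_def adj_rel_def by (auto elim: rtranclE)

lemma joined_ends_cong: "ends H = ends H' \<Longrightarrow> joined H S u v = joined H' S u v"
  unfolding joined_def adj_rel_def by simp

lemma st_cong:
  assumes "verts H = verts H'" "arcs H = arcs H'" "ends H = ends H'"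
  shows "spanning_tree H T = spanning_tree H' T"
  unfolding spanning_tree_def connected_by_def acyclic_edges_def
  using joined_ends_cong[OF assms(3)] assms by simp

lemma tree_sum_cong:
  assumes "verts H = verts H'" "arcs H = arcs H'" "ends H = ends H'"
    "\<And>e. e \<in> arcs H \<Longrightarrow> wt H e = wt H' e"
  shows "tree_sum H = tree_sum H'"
  unfolding tree_sum_def st_cong[OF assms(1-3)]
  apply (rule sum.cong, simp)
  apply (rule prod.cong, simp)
  using assms(2,4) unfolding spanning_tree_def by auto

lemma joined_cut:
  assumes "joined H S x z" and "ends H g = (c,d)"
  shows "joined H (S-{g}) x z \<or> (joined H (S-{g}) x c \<and> joined H (S-{g}) d z)
         \<or> (joined H (S-{g}) x d \<and> joined H (S-{g}) c z)"
  using assms(1) unfolding joined_def[of H S]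
proof (induction rule: rtrancl_induct)
  case base then show ?case by simp
next
  case (step y z)
  from step.hyps(2) obtain h where h: "h \<in> S" "ends H h = (y,z) \<or> ends H h = (z,y)"
    unfolding adj_rel_def by auto
  show ?case
  proof (cases "h = g")
    case False
    then have "joined H (S-{g}) y z"
      using h joined_edge joined_edge' by (metis Diff_iff singletonD)
    then show ?thesis using step.IH joined_trans by metis
  next
    case True
    then have yz: "(y,z) = (c,d) \<or> (y,z) = (d,c)" using h assms(2) by auto
    show ?thesis using step.IH yz joined_refl by auto
  qed
qed

lemma joined_minimal:
  assumes "finite S" "joined H S x y" "x \<noteq> y"
  shows "\<exists>g\<in>S. (joined H (S-{g}) x (fst (ends H g)) \<and> joined H (S-{g}) (snd (ends H g)) y)
         \<or> (joined H (S-{g}) x (snd (ends H g)) \<and> joined H (S-{g}) (fst (ends H g)) y)"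
  using assms
proof (induction S rule: finite_psubset_induct)
  case (psubset S)
  show ?case
  proof (cases "\<exists>g\<in>S. joined H (S-{g}) x y")
    case True
    then obtain g where g: "g \<in> S" "joined H (S-{g}) x y" by auto
    have "S - {g} \<subset> S" using g by auto
    from psubset.IH[OF this g(2) psubset.prems(2)] obtain h where
      h: "h \<in> S - {g}" "(joined H (S - {g} - {h}) x (fst (ends H h)) \<and> joined H (S - {g} - {h}) (snd (ends H h)) y)
         \<or> (joined H (S - {g} - {h}) x (snd (ends H h)) \<and> joined H (S - {g} - {h}) (fst (ends H h)) y)"
      by blast
    have sub: "S - {g} - {h} \<subseteq> S - {h}" by auto
    show ?thesis using h joined_mono[OF _ sub] by (metis DiffD1)
  next
    case False
    have "S \<noteq> {}" using psubset.prems joined_empty by metis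
    then obtain g where g: "g \<in> S" by auto
    obtain c d where cd: "ends H g = (c,d)" by fastforce
    from joined_cut[OF psubset.prems(1) cd] False g
    show ?thesis using cd g by (metis fst_conv snd_conv)
  qed
qed

lemma spanning_tree_delete:
  "spanning_tree (delete_edge H e) T \<longleftrightarrow> spanning_tree H T \<and> e \<notin> T"
  unfolding spanning_tree_def connected_by_def acyclic_edges_def delete_edge_def
  using joined_ends_cong[of "H\<lparr>arcs := arcs H - {e}\<rparr>" H] by auto

lemma no_loop_in_tree:
  "spanning_tree H T \<Longrightarrow> g \<in> T \<Longrightarrow> fst (ends H g) \<noteq> snd (ends H g)"
  unfolding spanning_tree_def acyclic_edges_def by auto

lemma tree_sum_delete_loop:
  assumes "fst (ends H e) = snd (ends H e)"
  shows "tree_sum H = tree_sum (delete_edge H e)"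
proof -
  have "{T. spanning_tree (delete_edge H e) T} = {T. spanning_tree H T}"
    using spanning_tree_delete no_loop_in_tree assms by metis
  then show ?thesis unfolding tree_sum_def by (simp add: delete_edge_def)
qed


definition cm :: "('v,'e) wgraph \<Rightarrow> 'e \<Rightarrow> 'v \<Rightarrow> 'v" where
  "cm H e v = (if v = snd (ends H e) then fst (ends H e) else v)"

lemma contract_simps:
  "verts (contract_edge H e) = cm H e ` verts H"
  "arcs (contract_edge H e) = arcs H - {e}"
  "ends (contract_edge H e) = map_prod (cm H e) (cm H e) \<circ> ends H"
  "wt (contract_edge H e) = wt H"
  unfolding contract_edge_def cm_def Let_def by (simp_all add: fun_eq_iff)

lemma cm_eq_joined:
  assumes "cm H e p = cm H e q" "e \<in> S"
  shows "joined H S p q"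
proof -
  have E: "joined H S (fst (ends H e)) (snd (ends H e))"
    using joined_edge[OF assms(2), of H "fst (ends H e)" "snd (ends H e)"] by simp
  show ?thesis
    using assms(1) E joined_sym unfolding cm_def by (auto split: if_splits)
qed

lemma joined_contract1:
  assumes "joined H S x y"
  shows "joined (contract_edge H e) (S - {e}) (cm H e x) (cm H e y)"
  using assms unfolding joined_def[of H]
proof (induction rule: rtrancl_induct)
  case base then show ?case by simp
next
  case (step y z)
  from step.hyps(2) obtain h where h: "h \<in> S" "ends H h = (y,z) \<or> ends H h = (z,y)"
    unfolding adj_rel_def by auto
  show ?case
  proof (cases "h = e")
    case True
    obtain a b where ab: "ends H e = (a,b)" by fastforce
    have "cm H e y = cm H e z" using h ab True unfolding cm_def by auto
    then show ?thesis using step.IH by simp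
  next
    case False
    have "ends (contract_edge H e) h = (cm H e y, cm H e z) \<or>
          ends (contract_edge H e) h = (cm H e z, cm H e y)"
      using h unfolding contract_simps by auto
    then have "joined (contract_edge H e) (S - {e}) (cm H e y) (cm H e z)"
      using False h(1) joined_edge joined_edge' by (metis DiffI singletonD)
    then show ?thesis using step.IH joined_trans by metis
  qed
qed

lemma joined_contract2_aux:
  assumes "(u, w) \<in> (adj_rel (contract_edge H e) S)\<^sup>*"
  shows "\<forall>x y. u = cm H e x \<longrightarrow> w = cm H e y \<longrightarrow> joined H (insert e S) x y"
  using assms
proof (induction rule: rtrancl_induct)
  case base then show ?case using cm_eq_joined by (metis insertI1)
next
  case (step w w')
  from step.hyps(2) obtain h where h: "h \<in> S"
    "ends (contract_edge H e) h = (w,w') \<or> ends (contract_edge H e) h = (w',w)"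
    unfolding adj_rel_def by auto
  obtain c d where cd: "ends H h = (c,d)" by fastforce
  show ?case
  proof (intro allI impI)
    fix x y assume xy: "u = cm H e x" "w' = cm H e y"
    from h(2) cd have cases: "(cm H e c = w \<and> cm H e d = w') \<or> (cm H e d = w \<and> cm H e c = w')"
      unfolding contract_simps by auto
    show "joined H (insert e S) x y"
    proof (cases "cm H e c = w \<and> cm H e d = w'")
      case True
      have 1: "joined H (insert e S) x c" using step.IH xy True by metis
      have 2: "joined H (insert e S) c d" using joined_edge[of h "insert e S" H c d] h cd by auto
      have 3: "joined H (insert e S) d y" using cm_eq_joined[of H e d y] True xy by auto
      show ?thesis using 1 2 3 joined_trans by metis
    next
      case False
      then have F: "cm H e d = w \<and> cm H e c = w'" using cases by auto
      have 1: "joined H (insert e S) x d" using step.IH xy F by metis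
      have 2: "joined H (insert e S) d c" using joined_edge'[of h "insert e S" H c d] h cd by auto
      have 3: "joined H (insert e S) c y" using cm_eq_joined[of H e c y] F xy by auto
      show ?thesis using 1 2 3 joined_trans by metis
    qed
  qed
qed

lemma joined_contract2:
  "joined (contract_edge H e) S (cm H e x) (cm H e y) \<Longrightarrow> joined H (insert e S) x y"
  using joined_contract2_aux unfolding joined_def by metis

lemma joined_contract_iff:
  assumes "e \<in> T"
  shows "joined (contract_edge H e) (T - {e}) (cm H e x) (cm H e y) \<longleftrightarrow> joined H T x y"
  using joined_contract1[of H T x y e] joined_contract2[of H e "T - {e}" x y] assms
  by (metis insert_Diff)

lemma spanning_tree_contract:
  assumes fin: "finite (arcs H)" and eA: "e \<in> arcs H"
    and nl: "fst (ends H e) \<noteq> snd (ends H e)" and eT: "e \<in> T"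
  shows "spanning_tree H T \<longleftrightarrow> spanning_tree (contract_edge H e) (T - {e})"
proof -
  let ?C = "contract_edge H e"
  have sub: "T \<subseteq> arcs H \<longleftrightarrow> T - {e} \<subseteq> arcs ?C" using eA eT unfolding contract_simps by auto
  have con: "connected_by H T \<longleftrightarrow> connected_by ?C (T - {e})"
  proof
    assume A: "connected_by H T"
    show "connected_by ?C (T - {e})" unfolding connected_by_def
    proof (intro ballI)
      fix u v assume "u \<in> verts ?C" "v \<in> verts ?C"
      then obtain x y where "x \<in> verts H" "y \<in> verts H" "u = cm H e x" "v = cm H e y"
        unfolding contract_simps by auto
      then show "joined ?C (T - {e}) u v" using A joined_contract_iff[OF eT, of H] unfolding connected_by_def by simp
    qed
  next
    assume A: "connected_by ?C (T - {e})"
    show "connected_by H T" unfolding connected_by_def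
    proof (intro ballI)
      fix x y assume "x \<in> verts H" "y \<in> verts H"
      then have "cm H e x \<in> verts ?C" "cm H e y \<in> verts ?C" unfolding contract_simps by auto
      then have "joined ?C (T - {e}) (cm H e x) (cm H e y)" using A unfolding connected_by_def by blast
      then show "joined H T x y" using joined_contract_iff[OF eT, of H] by simp
    qed
  qed
  have ac_g: "\<And>g. g \<in> T - {e} \<Longrightarrow>
     (fst (ends H g) \<noteq> snd (ends H g) \<and> \<not> joined H (T - {g}) (fst (ends H g)) (snd (ends H g)))
     \<longleftrightarrow> (fst (ends ?C g) \<noteq> snd (ends ?C g) \<and> \<not> joined ?C (T - {e} - {g}) (fst (ends ?C g)) (snd (ends ?C g)))"
  proof -
    fix g assume g: "g \<in> T - {e}"
    obtain c d where cd: "ends H g = (c,d)" by fastforce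
    have eTg: "e \<in> T - {g}" using g eT by auto
    have TT: "T - {e} - {g} = (T - {g}) - {e}" by auto
    have J: "joined ?C (T - {e} - {g}) (cm H e c) (cm H e d) \<longleftrightarrow> joined H (T - {g}) c d"
      using joined_contract_iff[OF eTg] TT by simp
    have "cm H e c = cm H e d \<Longrightarrow> joined H (T - {g}) c d" using cm_eq_joined eTg by metis
    moreover have "ends ?C g = (cm H e c, cm H e d)" using cd by (simp add: contract_simps)
    ultimately show "?thesis g" using J cd by (metis fst_conv snd_conv)
  qed
  have ac: "acyclic_edges H T \<longleftrightarrow> acyclic_edges ?C (T - {e})" if "T \<subseteq> arcs H"
  proof
    assume "acyclic_edges H T" then show "acyclic_edges ?C (T - {e})"
      unfolding acyclic_edges_def using ac_g by (meson DiffD1)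
  next
    assume A: "acyclic_edges ?C (T - {e})"
    have ge: "\<And>g. g \<in> T - {e} \<Longrightarrow> fst (ends H g) \<noteq> snd (ends H g) \<and> \<not> joined H (T - {g}) (fst (ends H g)) (snd (ends H g))"
      using A ac_g unfolding acyclic_edges_def by blast
    have "\<not> joined H (T - {e}) (fst (ends H e)) (snd (ends H e))"
    proof
      assume J: "joined H (T - {e}) (fst (ends H e)) (snd (ends H e))"
      have finT: "finite (T - {e})" using fin that finite_subset by blast
      from joined_minimal[OF finT J nl] obtain g where g: "g \<in> T - {e}" and
        gg: "(joined H (T - {e} - {g}) (fst (ends H e)) (fst (ends H g)) \<and> joined H (T - {e} - {g}) (snd (ends H g)) (snd (ends H e)))
         \<or> (joined H (T - {e} - {g}) (fst (ends H e)) (snd (ends H g)) \<and> joined H (T - {e} - {g}) (fst (ends H g)) (snd (ends H e)))"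
        by blast
      have sub2: "T - {e} - {g} \<subseteq> T - {g}" by auto
      have eTg: "e \<in> T - {g}" using g eT by auto
      have E: "joined H (T - {g}) (fst (ends H e)) (snd (ends H e))"
        using joined_edge[OF eTg, of H "fst (ends H e)" "snd (ends H e)"] by simp
      have "joined H (T - {g}) (fst (ends H g)) (snd (ends H g))"
        using gg
      proof
        assume gg1: "joined H (T - {e} - {g}) (fst (ends H e)) (fst (ends H g)) \<and> joined H (T - {e} - {g}) (snd (ends H g)) (snd (ends H e))"
        have 1: "joined H (T - {g}) (fst (ends H g)) (fst (ends H e))" using gg1 joined_mono[OF _ sub2] joined_sym by metis
        have 2: "joined H (T - {g}) (snd (ends H e)) (snd (ends H g))" using gg1 joined_mono[OF _ sub2] joined_sym by metis
        show ?thesis using 1 2 E joined_trans by metis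
      next
        assume gg1: "joined H (T - {e} - {g}) (fst (ends H e)) (snd (ends H g)) \<and> joined H (T - {e} - {g}) (fst (ends H g)) (snd (ends H e))"
        have 1: "joined H (T - {g}) (snd (ends H g)) (fst (ends H e))" using gg1 joined_mono[OF _ sub2] joined_sym by metis
        have 2: "joined H (T - {g}) (snd (ends H e)) (fst (ends H g))" using gg1 joined_mono[OF _ sub2] joined_sym by metis
        have "joined H (T - {g}) (snd (ends H g)) (fst (ends H g))" using 1 2 E joined_trans by metis
        then show ?thesis using joined_sym by metis
      qed
      then show False using ge g by blast
    qed
    then show "acyclic_edges H T" unfolding acyclic_edges_def using ge nl by blast
  qed
  show ?thesis unfolding spanning_tree_def using sub con ac by blast
qed

lemma finite_trees: "finite (arcs H) \<Longrightarrow> finite {T. spanning_tree H T}"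
  unfolding spanning_tree_def by (rule finite_subset[of _ "Pow (arcs H)"]) auto

lemma tree_sum_dc:
  assumes fin: "finite (arcs H)" and eA: "e \<in> arcs H"
    and nl: "fst (ends H e) \<noteq> snd (ends H e)"
  shows "tree_sum H = tree_sum (delete_edge H e) + wt H e * tree_sum (contract_edge H e)"
proof -
  let ?C = "contract_edge H e"
  let ?A = "{T. spanning_tree H T \<and> e \<notin> T}"
  let ?B = "{T. spanning_tree H T \<and> e \<in> T}"
  let ?S = "{S. spanning_tree ?C S}"
  have split: "{T. spanning_tree H T} = ?A \<union> ?B" by auto
  have fT: "finite {T. spanning_tree H T}" by (rule finite_trees[OF fin])
  have finA: "finite ?A" by (rule finite_subset[OF _ fT]) auto
  have finB: "finite ?B" by (rule finite_subset[OF _ fT]) auto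
  have A: "?A = {T. spanning_tree (delete_edge H e) T}" by (simp add: spanning_tree_delete)
  have Cnoe: "\<And>S. spanning_tree ?C S \<Longrightarrow> e \<notin> S"
  proof -
    fix S assume "spanning_tree ?C S"
    then have "S \<subseteq> arcs H - {e}" unfolding spanning_tree_def contract_simps by simp
    then show "e \<notin> S" by auto
  qed
  have CsubA: "\<And>S. spanning_tree ?C S \<Longrightarrow> S \<subseteq> arcs H"
  proof -
    fix S assume "spanning_tree ?C S"
    then have "S \<subseteq> arcs H - {e}" unfolding spanning_tree_def contract_simps by simp
    then show "S \<subseteq> arcs H" by auto
  qed
  have B1: "T - {e} \<in> ?S" if "T \<in> ?B" for T
  proof -
    have T1: "spanning_tree H T" "e \<in> T" using that by auto
    show ?thesis using iffD1[OF spanning_tree_contract[OF fin eA nl T1(2)] T1(1)] by simp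
  qed
  have B2: "insert e S \<in> ?B" if "S \<in> ?S" for S
  proof -
    have S: "spanning_tree ?C S" using that by simp
    have eS: "e \<notin> S" using Cnoe[OF S] .
    have eT: "e \<in> insert e S" by simp
    have "insert e S - {e} = S" using eS by simp
    then have "spanning_tree H (insert e S)" using iffD2[OF spanning_tree_contract[OF fin eA nl eT]] S by simp
    then show ?thesis by simp
  qed
  have B: "?B = insert e ` ?S"
  proof (rule subset_antisym; rule subsetI)
    fix T assume T: "T \<in> ?B"
    have "T = insert e (T - {e})" using T by auto
    then show "T \<in> insert e ` ?S" using B1[OF T] by (rule image_eqI)
  next
    fix T assume "T \<in> insert e ` ?S"
    then obtain S where S: "T = insert e S" "S \<in> ?S" by (rule imageE)
    show "T \<in> ?B" using B2[OF S(2)] S(1) by simp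
  qed
  have inj: "inj_on (insert e) ?S"
  proof (rule inj_onI)
    fix S S' assume a: "S \<in> ?S" "S' \<in> ?S" "insert e S = insert e S'"
    have "e \<notin> S" "e \<notin> S'" using Cnoe a(1,2) by simp_all
    then show "S = S'" using a(3) by (metis Diff_insert_absorb)
  qed
  have "tree_sum H = (\<Sum>T\<in>?A. prod (wt H) T) + (\<Sum>T\<in>?B. prod (wt H) T)"
    unfolding tree_sum_def split by (rule sum.union_disjoint[OF finA finB]) auto
  also have "(\<Sum>T\<in>?A. prod (wt H) T) = tree_sum (delete_edge H e)"
    unfolding tree_sum_def A by (simp add: delete_edge_def)
  also have "(\<Sum>T\<in>?B. prod (wt H) T) = (\<Sum>S\<in>?S. prod (wt H) (insert e S))"
    unfolding B by (rule sum.reindex[OF inj, unfolded comp_def])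
  also have "\<dots> = (\<Sum>S\<in>?S. wt H e * prod (wt H) S)"
  proof (rule sum.cong[OF refl])
    fix S assume S: "S \<in> ?S"
    have "S \<subseteq> arcs H" using CsubA S by simp
    then have fS: "finite S" using fin by (rule finite_subset)
    have "e \<notin> S" using Cnoe S by simp
    then show "prod (wt H) (insert e S) = wt H e * prod (wt H) S" using prod.insert[OF fS] by simp
  qed
  also have "\<dots> = wt H e * tree_sum ?C"
    unfolding tree_sum_def contract_simps sum_distrib_left by simp
  finally show ?thesis .
qed


definition det_on :: "nat set \<Rightarrow> (nat \<Rightarrow> nat \<Rightarrow> real) \<Rightarrow> real" where
  "det_on V M = det (mat (card V) (card V)
      (\<lambda>(i,j). M (sorted_list_of_set V ! i) (sorted_list_of_set V ! j)))"

lemma det_on_cong: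
  assumes "finite V" "\<And>u v. u \<in> V \<Longrightarrow> v \<in> V \<Longrightarrow> M u v = M' u v"
  shows "det_on V M = det_on V M'"
proof -
  let ?xs = "sorted_list_of_set V"
  have "\<And>i. i < card V \<Longrightarrow> ?xs ! i \<in> V"
    using assms(1) by (metis length_sorted_list_of_set nth_mem set_sorted_list_of_set)
  then have "mat (card V) (card V) (\<lambda>(i,j). M (?xs ! i) (?xs ! j))
           = mat (card V) (card V) (\<lambda>(i,j). M' (?xs ! i) (?xs ! j))"
    using assms(2) by (intro eq_matI) auto
  then show ?thesis unfolding det_on_def by simp
qed

lemma remove1_nth_distinct:
  "distinct xs \<Longrightarrow> k < length xs \<Longrightarrow> remove1 (xs ! k) xs = take k xs @ drop (Suc k) xs"
proof (induction xs arbitrary: k)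
  case Nil then show ?case by simp
next
  case (Cons x xs)
  show ?case
  proof (cases k)
    case 0 then show ?thesis by simp
  next
    case (Suc k')
    then have "xs ! k' \<noteq> x" using Cons.prems by (metis distinct.simps(2) nth_mem Suc_less_SucD length_Cons)
    then show ?thesis using Cons Suc by auto
  qed
qed

lemma sorted_remove_nth:
  assumes "finite V" "k < card V" "i < card V - 1"
  shows "sorted_list_of_set (V - {sorted_list_of_set V ! k}) ! i
       = sorted_list_of_set V ! (if i < k then i else Suc i)"
proof -
  let ?xs = "sorted_list_of_set V"
  have d: "distinct ?xs" by simp
  have l: "length ?xs = card V" by simp
  have "sorted_list_of_set (V - {?xs ! k}) = take k ?xs @ drop (Suc k) ?xs"
    using sorted_list_of_set_remove[OF assms(1)] remove1_nth_distinct[OF d] assms(2) l by simp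
  then show ?thesis using assms l by (auto simp: nth_append min_def)
qed

lemma det_on_diag_update:
  assumes fin: "finite V" and b: "b \<in> V"
  shows "det_on V (\<lambda>u v. M u v + (if u = b \<and> v = b then w else 0))
       = det_on V M + w * det_on (V - {b}) M"
proof -
  let ?xs = "sorted_list_of_set V"
  let ?n = "card V"
  obtain k where k: "k < ?n" "?xs ! k = b"
    using b fin by (metis in_set_conv_nth length_sorted_list_of_set set_sorted_list_of_set)
  have d: "distinct ?xs" by simp
  have idx: "\<And>i. i < ?n \<Longrightarrow> ?xs ! i = b \<longleftrightarrow> i = k"
    using k d by (metis length_sorted_list_of_set nth_eq_iff_index_eq)
  define A where "A = mat ?n ?n (\<lambda>(i,j). M (?xs ! i) (?xs ! j))"
  define A' where "A' = mat ?n ?n (\<lambda>(i,j). M (?xs ! i) (?xs ! j) + (if ?xs ! i = b \<and> ?xs ! j = b then w else 0))"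
  have A: "A \<in> carrier_mat ?n ?n" "A' \<in> carrier_mat ?n ?n" unfolding A_def A'_def by auto
  have del: "\<And>j. j < ?n \<Longrightarrow> mat_delete A' k j = mat_delete A k j"
    unfolding mat_delete_def A_def A'_def
    by (intro eq_matI) (auto simp: idx)
  have "det A' = (\<Sum>j<?n. A' $$ (k,j) * cofactor A' k j)"
    by (rule laplace_expansion_row[OF A(2) k(1)])
  also have "\<dots> = (\<Sum>j<?n. A $$ (k,j) * cofactor A k j + (if j = k then w * cofactor A k k else 0))"
  proof (rule sum.cong[OF refl])
    fix j assume j: "j \<in> {..<?n}"
    have e1: "A' $$ (k,j) = A $$ (k,j) + (if j = k then w else 0)"
      using j k unfolding A_def A'_def by (auto simp: idx)
    have e2: "cofactor A' k j = cofactor A k j" unfolding cofactor_def using del j by simp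
    show "A' $$ (k,j) * cofactor A' k j = A $$ (k,j) * cofactor A k j + (if j = k then w * cofactor A k k else 0)"
      unfolding e1 e2 by (simp add: algebra_simps)
  qed
  also have "\<dots> = det A + w * cofactor A k k"
    using laplace_expansion_row[OF A(1) k(1)] k(1) by (simp add: sum.distrib)
  also have "cofactor A k k = det (mat_delete A k k)" unfolding cofactor_def by simp
  also have "mat_delete A k k = mat (card (V - {b})) (card (V - {b}))
      (\<lambda>(i,j). M (sorted_list_of_set (V - {b}) ! i) (sorted_list_of_set (V - {b}) ! j))"
  proof -
    have c: "card (V - {b}) = ?n - 1" using b fin by simp
    show ?thesis unfolding mat_delete_def A_def c
      by (intro eq_matI) (auto simp: sorted_remove_nth[OF fin k(1), unfolded k(2)])
  qed
  finally show ?thesis unfolding det_on_def A_def A'_def by simp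
qed

definition rc_op :: "nat \<Rightarrow> nat \<Rightarrow> (nat \<Rightarrow> nat \<Rightarrow> real) \<Rightarrow> nat \<Rightarrow> nat \<Rightarrow> real" where
  "rc_op a b M u v = M u v + (if u = a then M b v else 0) + (if v = a then M u b else 0)
     + (if u = a \<and> v = a then M b b else 0)"

lemma det_on_rc_op:
  assumes fin: "finite V" and a: "a \<in> V" and b: "b \<in> V" and ab: "a \<noteq> b"
  shows "det_on V (rc_op a b M) = det_on V M"
proof -
  let ?xs = "sorted_list_of_set V"
  let ?n = "card V"
  obtain ka where ka: "ka < ?n" "?xs ! ka = a"
    using a fin by (metis in_set_conv_nth length_sorted_list_of_set set_sorted_list_of_set)
  obtain kb where kb: "kb < ?n" "?xs ! kb = b"
    using b fin by (metis in_set_conv_nth length_sorted_list_of_set set_sorted_list_of_set)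
  have d: "distinct ?xs" by simp
  have idxa: "\<And>i. i < ?n \<Longrightarrow> ?xs ! i = a \<longleftrightarrow> i = ka"
    using ka d by (metis length_sorted_list_of_set nth_eq_iff_index_eq)
  have kab: "ka \<noteq> kb" using ka kb ab by auto
  define A where "A = mat ?n ?n (\<lambda>(i,j). M (?xs ! i) (?xs ! j))"
  have A: "A \<in> carrier_mat ?n ?n" unfolding A_def by auto
  have A1: "addrow 1 ka kb A \<in> carrier_mat ?n ?n" using A by simp
  have "det (addcol 1 ka kb (addrow 1 ka kb A)) = det A"
    using det_addcol[OF kb(1) kab A1] det_addrow[OF kb(1) kab A] by simp
  moreover have "addcol 1 ka kb (addrow 1 ka kb A)
     = mat ?n ?n (\<lambda>(i,j). rc_op a b M (?xs ! i) (?xs ! j))"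
    unfolding A_def rc_op_def mat_addcol_def mat_addrow_def
    by (intro eq_matI) (auto simp: idxa kb ka)
  ultimately show ?thesis unfolding det_on_def A_def by simp
qed


definition lc :: "nat \<times> nat \<Rightarrow> nat \<Rightarrow> nat \<Rightarrow> real" where
  "lc cd u v = (if fst cd = snd cd then 0 else if u = v then (if u = fst cd \<or> u = snd cd then 1 else 0)
     else if (u = fst cd \<and> v = snd cd) \<or> (u = snd cd \<and> v = fst cd) then -1 else 0)"

definition lapl :: "(nat,'e) wgraph \<Rightarrow> nat \<Rightarrow> nat \<Rightarrow> real" where
  "lapl H u v = (\<Sum>g\<in>arcs H. wt H g * lc (ends H g) u v)"

definition wfg :: "(nat,'e) wgraph \<Rightarrow> bool" where
  "wfg H \<longleftrightarrow> finite (verts H) \<and> finite (arcs H) \<and>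
     (\<forall>g\<in>arcs H. fst (ends H g) \<in> verts H \<and> snd (ends H g) \<in> verts H)"

lemma lc_contract:
  assumes "a \<noteq> b" "u \<noteq> b" "v \<noteq> b"
  shows "lc (if c = b then a else c, if d = b then a else d) u v = rc_op a b (lc (c,d)) u v"
  using assms by (cases "c = b"; cases "d = b"; cases "u = v"; cases "u = a"; cases "v = a"; simp add: lc_def rc_op_def)

lemma rc_op_lc: "a \<noteq> b \<Longrightarrow> rc_op a b (lc (a,b)) u v = (if u = b \<and> v = b then 1 else 0)"
  unfolding lc_def rc_op_def by auto

lemma rc_op_add: "rc_op a b (\<lambda>u v. M u v + w * M' u v) u v = rc_op a b M u v + w * rc_op a b M' u v"
  unfolding rc_op_def by (simp add: algebra_simps)

lemma rc_op_sum: "rc_op a b (\<lambda>u v. \<Sum>g\<in>S. f g u v) u v = (\<Sum>g\<in>S. rc_op a b (f g) u v)"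
  unfolding rc_op_def by (simp add: sum.distrib)

lemma rc_op_scale: "rc_op a b (\<lambda>u v. w * M u v) u v = w * rc_op a b M u v"
  unfolding rc_op_def by (simp add: algebra_simps)

lemma lapl_remove:
  assumes "finite (arcs H)" "e \<in> arcs H"
  shows "lapl H u v = lapl (delete_edge H e) u v + wt H e * lc (ends H e) u v"
  unfolding lapl_def delete_edge_def using sum.remove[OF assms, of "\<lambda>g. wt H g * lc (ends H g) u v"]
  by simp

lemma lapl_contract:
  assumes ab: "ends H e = (a,b)" "a \<noteq> b" and uv: "u \<noteq> b" "v \<noteq> b"
  shows "lapl (contract_edge H e) u v = rc_op a b (lapl (delete_edge H e)) u v"
proof -
  have "lapl (contract_edge H e) u v = (\<Sum>g\<in>arcs H - {e}. wt H g * lc (map_prod (cm H e) (cm H e) (ends H g)) u v)"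
    unfolding lapl_def contract_simps by simp
  also have "\<dots> = (\<Sum>g\<in>arcs H - {e}. rc_op a b (\<lambda>u v. wt H g * lc (ends H g) u v) u v)"
  proof (rule sum.cong[OF refl])
    fix g
    obtain c d where cd: "ends H g = (c,d)" by fastforce
    have "map_prod (cm H e) (cm H e) (ends H g) = (if c = b then a else c, if d = b then a else d)"
      using cd ab unfolding cm_def by simp
    then show "wt H g * lc (map_prod (cm H e) (cm H e) (ends H g)) u v = rc_op a b (\<lambda>u v. wt H g * lc (ends H g) u v) u v"
      using lc_contract[OF ab(2) uv, of c d] cd rc_op_scale by simp
  qed
  also have "\<dots> = rc_op a b (lapl (delete_edge H e)) u v"
    unfolding lapl_def delete_edge_def using rc_op_sum[where a=a and b=b and S="arcs H - {e}" and f="\<lambda>g u v. wt H g * lc (ends H g) u v" and u=u and v=v]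
    by simp
  finally show ?thesis .
qed


lemma wfg_delete: "wfg H \<Longrightarrow> wfg (delete_edge H e)"
  unfolding wfg_def delete_edge_def by auto

lemma wfg_contract: "wfg H \<Longrightarrow> wfg (contract_edge H e)"
  unfolding wfg_def contract_simps by auto

lemma verts_contract:
  assumes "wfg H" "e \<in> arcs H" "ends H e = (a,b)" "a \<noteq> b"
  shows "verts (contract_edge H e) = verts H - {b}"
proof -
  have aV: "a \<in> verts H" using assms unfolding wfg_def by force
  show ?thesis unfolding contract_simps cm_def using assms(3,4) aV by force
qed

lemma det_on_empty: "det_on {} M = 1"
  unfolding det_on_def by simp

lemma det_on_zero: "finite W \<Longrightarrow> W \<noteq> {} \<Longrightarrow> det_on W (\<lambda>u v. 0) = 0"
proof -
  assume "finite W" "W \<noteq> {}"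
  then have c: "card W > 0" by (simp add: card_gt_0_iff)
  have "mat (card W) (card W) (\<lambda>(i,j). (0::real)) = 0\<^sub>m (card W) (card W)"
    by (intro eq_matI) auto
  then show ?thesis unfolding det_on_def using c by simp
qed

theorem matrix_tree:
  "wfg H \<Longrightarrow> r \<in> verts H \<Longrightarrow> tree_sum H = det_on (verts H - {r}) (lapl H)"
proof (induction "card (arcs H)" arbitrary: H r rule: less_induct)
  case less
  have finV: "finite (verts H)" and fin: "finite (arcs H)" using less.prems unfolding wfg_def by auto
  show ?case
  proof (cases "arcs H = {}")
    case True
    have lz: "lapl H = (\<lambda>u v. 0)" unfolding lapl_def True by (simp add: fun_eq_iff)
    have sub: "{T. spanning_tree H T} \<subseteq> {{}}" unfolding spanning_tree_def True by auto
    show ?thesis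
    proof (cases "verts H - {r} = {}")
      case True
      have "spanning_tree H {}"
      proof -
        have "\<And>u x. u \<in> verts H \<Longrightarrow> x \<in> verts H \<Longrightarrow> u = x" using True by blast
        then show ?thesis unfolding spanning_tree_def connected_by_def acyclic_edges_def by (metis empty_iff empty_subsetI joined_refl)
      qed
      then have "{T. spanning_tree H T} = {{}}" using sub by auto
      then show ?thesis unfolding tree_sum_def True det_on_empty by simp
    next
      case False
      then obtain u where u: "u \<in> verts H" "u \<noteq> r" by auto
      have "\<not> spanning_tree H {}" unfolding spanning_tree_def connected_by_def
        using u less.prems(2) joined_empty by metis
      then have "{T. spanning_tree H T} = {}" using sub by auto
      then have "tree_sum H = 0" unfolding tree_sum_def by (metis sum.empty)
      then show ?thesis unfolding lz using det_on_zero[OF _ False] finV by simp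
    qed
  next
    case False
    then obtain e where eA: "e \<in> arcs H" by auto
    obtain a b where ab: "ends H e = (a,b)" by fastforce
    have abV: "a \<in> verts H" "b \<in> verts H" using less.prems(1) eA ab unfolding wfg_def by force+
    let ?D = "delete_edge H e"
    let ?L = "lapl ?D"
    let ?w = "wt H e"
    have cardD: "card (arcs ?D) < card (arcs H)"
      using card_Diff1_less[OF fin eA] by (simp add: delete_edge_def)
    have vD: "verts ?D = verts H" unfolding delete_edge_def by simp
    have IHD: "tree_sum ?D = det_on (verts H - {r}) ?L"
      using less.hyps[OF cardD wfg_delete[OF less.prems(1)]] less.prems(2) vD by simp
    have lH: "\<And>u v. lapl H u v = ?L u v + ?w * lc (a,b) u v"
      using lapl_remove[OF fin eA] ab by simp
    show ?thesis
    proof (cases "a = b")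
      case True
      have "tree_sum H = tree_sum ?D" by (rule tree_sum_delete_loop) (simp add: ab True)
      moreover have "lapl H = ?L" using lH True by (simp add: fun_eq_iff lc_def)
      ultimately show ?thesis using IHD by simp
    next
      case False
      let ?C = "contract_edge H e"
      have cardC: "card (arcs ?C) < card (arcs H)"
        unfolding contract_simps by (rule card_Diff1_less[OF fin eA])
      have vC: "verts ?C = verts H - {b}" by (rule verts_contract[OF less.prems(1) eA ab False])
      define r' where "r' = (if r = b then a else r)"
      have r'C: "r' \<in> verts ?C" unfolding vC r'_def using less.prems(2) abV False by auto
      have IHC: "tree_sum ?C = det_on (verts H - {b} - {r'}) (lapl ?C)"
        using less.hyps[OF cardC wfg_contract[OF less.prems(1)] r'C] vC by simp
      have dc: "tree_sum H = tree_sum ?D + ?w * tree_sum ?C"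
        by (rule tree_sum_dc[OF fin eA]) (simp add: ab False)
      have lC: "\<And>u v. u \<noteq> b \<Longrightarrow> v \<noteq> b \<Longrightarrow> lapl ?C u v = rc_op a b ?L u v"
        using lapl_contract[OF ab False] by blast
      have finW: "finite (verts H - {r})" using finV by simp
      consider "r = b" | "r = a" | "r \<noteq> a \<and> r \<noteq> b" by blast
      then show ?thesis
      proof cases
        case 1
        have aW: "a \<in> verts H - {r}" using abV False 1 by auto
        have "det_on (verts H - {r}) (lapl H) = det_on (verts H - {r}) (\<lambda>u v. ?L u v + (if u = a \<and> v = a then ?w else 0))"
          by (rule det_on_cong[OF finW]) (use 1 in \<open>auto simp: lH lc_def\<close>)
        also have "\<dots> = det_on (verts H - {r}) ?L + ?w * det_on (verts H - {r} - {a}) ?L"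
          by (rule det_on_diag_update[OF finW aW])
        also have "det_on (verts H - {r} - {a}) ?L = det_on (verts H - {b} - {r'}) (lapl ?C)"
        proof -
          have se: "verts H - {b} - {r'} = verts H - {r} - {a}" unfolding r'_def using 1 by auto
          show ?thesis unfolding se using 1 by (intro det_on_cong) (auto simp: lC rc_op_def finV)
        qed
        finally show ?thesis using dc IHD IHC by simp
      next
        case 2
        have bW: "b \<in> verts H - {r}" using abV False 2 by auto
        have "det_on (verts H - {r}) (lapl H) = det_on (verts H - {r}) (\<lambda>u v. ?L u v + (if u = b \<and> v = b then ?w else 0))"
          by (rule det_on_cong[OF finW]) (use 2 in \<open>auto simp: lH lc_def\<close>)
        also have "\<dots> = det_on (verts H - {r}) ?L + ?w * det_on (verts H - {r} - {b}) ?L"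
          by (rule det_on_diag_update[OF finW bW])
        also have "det_on (verts H - {r} - {b}) ?L = det_on (verts H - {b} - {r'}) (lapl ?C)"
        proof -
          have se: "verts H - {b} - {r'} = verts H - {r} - {b}" unfolding r'_def using 2 False by auto
          show ?thesis unfolding se using 2 by (intro det_on_cong) (auto simp: lC rc_op_def finV)
        qed
        finally show ?thesis using dc IHD IHC by simp
      next
        case 3
        have aW: "a \<in> verts H - {r}" and bW: "b \<in> verts H - {r}" using abV 3 by auto
        have r'r: "r' = r" unfolding r'_def using 3 by simp
        have "det_on (verts H - {r}) (lapl H) = det_on (verts H - {r}) (rc_op a b (lapl H))"
          by (rule det_on_rc_op[OF finW aW bW False, symmetric])
        also have "\<dots> = det_on (verts H - {r}) (\<lambda>u v. rc_op a b ?L u v + (if u = b \<and> v = b then ?w else 0))"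
        proof (rule det_on_cong[OF finW])
          fix u v
          have "lapl H = (\<lambda>u v. ?L u v + ?w * lc (a,b) u v)" using lH by (simp add: fun_eq_iff)
          then show "rc_op a b (lapl H) u v = rc_op a b ?L u v + (if u = b \<and> v = b then ?w else 0)"
            using rc_op_add[of a b ?L ?w "lc (a,b)" u v] rc_op_lc[OF False, of u v] by simp
        qed
        also have "\<dots> = det_on (verts H - {r}) (rc_op a b ?L) + ?w * det_on (verts H - {r} - {b}) (rc_op a b ?L)"
          by (rule det_on_diag_update[OF finW bW])
        also have "det_on (verts H - {r}) (rc_op a b ?L) = det_on (verts H - {r}) ?L"
          by (rule det_on_rc_op[OF finW aW bW False])
        also have "det_on (verts H - {r} - {b}) (rc_op a b ?L) = det_on (verts H - {b} - {r'}) (lapl ?C)"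
        proof -
          have se: "verts H - {b} - {r'} = verts H - {r} - {b}" unfolding r'r by auto
          show ?thesis unfolding se by (intro det_on_cong) (auto simp: lC finV)
        qed
        finally show ?thesis using dc IHD IHC by simp
      qed
    qed
  qed
qed


definition bf :: "nat \<Rightarrow> real mat \<Rightarrow> (nat \<Rightarrow> real) \<Rightarrow> (nat \<Rightarrow> real) \<Rightarrow> real" where
  "bf n M x y = (\<Sum>i<n. \<Sum>j<n. x i * y j * M $$ (i,j))"

definition nsq :: "nat \<Rightarrow> (nat \<Rightarrow> real) \<Rightarrow> real" where
  "nsq n x = (\<Sum>i<n. (x i)^2)"

definition symm :: "nat \<Rightarrow> real mat \<Rightarrow> bool" where
  "symm n M \<longleftrightarrow> (\<forall>i<n. \<forall>j<n. M $$ (i,j) = M $$ (j,i))"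

lemma nsq_nonneg: "nsq n x \<ge> 0"
  unfolding nsq_def by (intro sum_nonneg) auto

lemma sq_le_nsq: "i < n \<Longrightarrow> (x i)^2 \<le> nsq n x"
  unfolding nsq_def by (rule member_le_sum) auto

lemma prod_le_nsq: "i < n \<Longrightarrow> j < n \<Longrightarrow> \<bar>x i * x j\<bar> \<le> nsq n x"
proof -
  assume ij: "i < n" "j < n"
  have "\<bar>x i * x j\<bar> \<le> ((x i)^2 + (x j)^2) / 2"
  proof -
    have "0 \<le> (\<bar>x i\<bar> - \<bar>x j\<bar>)^2" by simp
    then show ?thesis by (simp add: abs_mult power2_eq_square algebra_simps)
  qed
  also have "\<dots> \<le> nsq n x" using sq_le_nsq[OF ij(1), of x] sq_le_nsq[OF ij(2), of x] by simp
  finally show ?thesis .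
qed

lemma bf_sym: "symm n M \<Longrightarrow> bf n M x y = bf n M y x"
  unfolding bf_def symm_def
  by (subst sum.swap) (simp add: algebra_simps)

lemma bf_expand:
  "bf n M (\<lambda>i. x i + l * y i) (\<lambda>i. x i + l * y i)
    = bf n M x x + l * (bf n M x y + bf n M y x) + l^2 * bf n M y y"
  unfolding bf_def by (simp add: algebra_simps sum.distrib sum_distrib_left power2_eq_square)

lemma cauchy_schwarz_psd:
  assumes sy: "symm n M" and psd: "\<And>z. bf n M z z \<ge> 0"
  shows "(bf n M x y)^2 \<le> bf n M x x * bf n M y y"
proof -
  define p where "p = bf n M x x"
  define q where "q = bf n M x y"
  define s where "s = bf n M y y"
  have key: "\<And>l. p + 2 * l * q + l^2 * s \<ge> 0"
  proof -
    fix l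
    have "bf n M (\<lambda>i. x i + l * y i) (\<lambda>i. x i + l * y i) \<ge> 0" by (rule psd)
    then show "p + 2 * l * q + l^2 * s \<ge> 0"
      unfolding bf_expand p_def q_def s_def bf_sym[OF sy, of y x] by simp
  qed
  have s0: "s \<ge> 0" unfolding s_def by (rule psd)
  show ?thesis
  proof (cases "s = 0")
    case True
    have "q = 0"
    proof (rule ccontr)
      assume q: "q \<noteq> 0"
      have "p + 2 * (-(p+1)/(2*q)) * q + (-(p+1)/(2*q))^2 * s \<ge> 0" by (rule key)
      then show False using q True by (simp add: field_simps)
    qed
    then show ?thesis unfolding p_def[symmetric] q_def[symmetric] s_def[symmetric] using True by simp
  next
    case False
    then have sp: "s > 0" using s0 by simp
    have "p + 2 * (-q/s) * q + (-q/s)^2 * s \<ge> 0" by (rule key)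
    then have "p - q^2 / s \<ge> 0" using sp by (simp add: field_simps power2_eq_square)
    then have "q^2 \<le> p * s" using sp by (simp add: field_simps)
    then show ?thesis unfolding p_def q_def s_def .
  qed
qed

lemma coercive:
  assumes M: "M \<in> carrier_mat n n" and sy: "symm n M" and psd: "\<And>z. bf n M z z \<ge> 0"
    and d: "det M \<noteq> 0"
  shows "\<exists>c>0. \<forall>x. bf n M x x \<ge> c * nsq n x"
proof -
  from det_non_zero_imp_unit[OF M d] obtain B where B: "B \<in> carrier_mat n n" and MB: "M * B = 1\<^sub>m n"
    unfolding Units_def ring_mat_def by auto
  define K where "K = (\<Sum>j<n. \<Sum>l<n. \<bar>B $$ (j,l)\<bar>)"
  have K0: "K \<ge> 0" unfolding K_def by (intro sum_nonneg) auto
  have MBe: "\<And>i l. i < n \<Longrightarrow> l < n \<Longrightarrow> (\<Sum>j<n. M $$ (i,j) * B $$ (j,l)) = (if i = l then 1 else 0)"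
  proof -
    fix i l assume il: "i < n" "l < n"
    have "(M * B) $$ (i,l) = (\<Sum>j<n. M $$ (i,j) * B $$ (j,l))"
      using M B il by (simp add: scalar_prod_def lessThan_atLeast0)
    then show "(\<Sum>j<n. M $$ (i,j) * B $$ (j,l)) = (if i = l then 1 else 0)" using MB il by simp
  qed
  show ?thesis
  proof (intro exI[of _ "1/(K+1)"] conjI allI)
    show "1/(K+1) > 0" using K0 by simp
    fix x
    define y where "y j = (\<Sum>l<n. B $$ (j,l) * x l)" for j
    have My: "\<And>i. i < n \<Longrightarrow> (\<Sum>j<n. M $$ (i,j) * y j) = x i"
    proof -
      fix i assume i: "i < n"
      have "(\<Sum>j<n. M $$ (i,j) * y j) = (\<Sum>l<n. (\<Sum>j<n. M $$ (i,j) * B $$ (j,l)) * x l)"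
        unfolding y_def sum_distrib_left sum_distrib_right
        by (subst sum.swap) (simp add: algebra_simps)
      also have "\<dots> = (\<Sum>l<n. (if i = l then x l else 0))"
        by (rule sum.cong[OF refl]) (simp add: MBe i)
      also have "\<dots> = x i" using i by simp
      finally show "(\<Sum>j<n. M $$ (i,j) * y j) = x i" .
    qed
    have bxy: "bf n M x y = nsq n x"
    proof -
      have "bf n M x y = (\<Sum>i<n. x i * (\<Sum>j<n. M $$ (i,j) * y j))"
        unfolding bf_def by (simp add: sum_distrib_left algebra_simps)
      also have "\<dots> = (\<Sum>i<n. (x i)^2)" by (rule sum.cong[OF refl]) (simp add: My power2_eq_square)
      finally show ?thesis unfolding nsq_def .
    qed
    have byy: "bf n M y y \<le> K * nsq n x"
    proof -
      have "bf n M y y = (\<Sum>i<n. y i * (\<Sum>j<n. M $$ (i,j) * y j))"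
        unfolding bf_def by (simp add: sum_distrib_left algebra_simps)
      also have "\<dots> = (\<Sum>i<n. y i * x i)" by (rule sum.cong[OF refl]) (simp add: My)
      also have "\<dots> = (\<Sum>i<n. \<Sum>l<n. B $$ (i,l) * (x l * x i))"
        unfolding y_def sum_distrib_right by (simp add: algebra_simps)
      also have "\<dots> \<le> (\<Sum>i<n. \<Sum>l<n. \<bar>B $$ (i,l)\<bar> * nsq n x)"
      proof (intro sum_mono)
        fix i l assume il: "i \<in> {..<n}" "l \<in> {..<n}"
        have "B $$ (i,l) * (x l * x i) \<le> \<bar>B $$ (i,l)\<bar> * \<bar>x l * x i\<bar>"
          by (metis abs_ge_self abs_mult)
        also have "\<dots> \<le> \<bar>B $$ (i,l)\<bar> * nsq n x"
          using prod_le_nsq[of l n i x] il by (intro mult_left_mono) auto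
        finally show "B $$ (i,l) * (x l * x i) \<le> \<bar>B $$ (i,l)\<bar> * nsq n x" .
      qed
      also have "\<dots> = K * nsq n x" unfolding K_def sum_distrib_right by simp
      finally show ?thesis .
    qed
    have cs: "(nsq n x)^2 \<le> bf n M x x * (K * nsq n x)"
    proof -
      have "(nsq n x)^2 \<le> bf n M x x * bf n M y y"
        using cauchy_schwarz_psd[OF sy psd, of x y] bxy by simp
      also have "\<dots> \<le> bf n M x x * (K * nsq n x)" using byy psd[of x] by (intro mult_left_mono) auto
      finally show ?thesis .
    qed
    show "bf n M x x \<ge> 1/(K+1) * nsq n x"
    proof (cases "nsq n x = 0")
      case True then show ?thesis using psd[of x] by simp
    next
      case False
      then have np: "nsq n x > 0" using nsq_nonneg[of n x] by simp
      have "nsq n x * nsq n x \<le> (K * bf n M x x) * nsq n x" using cs by (simp add: power2_eq_square algebra_simps)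
      then have "nsq n x \<le> K * bf n M x x" using np by simp
      also have "\<dots> \<le> (K + 1) * bf n M x x" using psd[of x] by (simp add: algebra_simps)
      finally have "nsq n x \<le> (K + 1) * bf n M x x" .
      then show ?thesis using K0 by (simp add: field_simps)
    qed
  qed
qed


lemma mult_vec_sum:
  assumes A: "A \<in> carrier_mat n n" and v: "v \<in> carrier_vec n" and i: "i < n"
  shows "(A *\<^sub>v v) $ i = (\<Sum>j<n. A $$ (i,j) * v $ j)"
  using A v i by (simp add: scalar_prod_def lessThan_atLeast0)

lemma nsq_pos_vec:
  assumes v: "v \<in> carrier_vec n" "v \<noteq> 0\<^sub>v n"
  shows "nsq n (\<lambda>i. v $ i) > 0"
proof -
  obtain i where i: "i < n" "v $ i \<noteq> 0" using v by (metis carrier_vecD eq_vecI index_zero_vec(1) index_zero_vec(2))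
  have "0 < (v $ i)^2" using i by simp
  also have "\<dots> \<le> nsq n (\<lambda>i. v $ i)" using sq_le_nsq[OF i(1)] .
  finally show ?thesis .
qed

lemma bf_kernel:
  assumes A: "A \<in> carrier_mat n n" and v: "v \<in> carrier_vec n"
    and Av: "\<And>i. i < n \<Longrightarrow> (A *\<^sub>v v) $ i = k * v $ i"
  shows "bf n A (\<lambda>i. v $ i) (\<lambda>i. v $ i) = k * nsq n (\<lambda>i. v $ i)"
proof -
  have "bf n A (\<lambda>i. v $ i) (\<lambda>i. v $ i) = (\<Sum>i<n. v $ i * (\<Sum>j<n. A $$ (i,j) * v $ j))"
    unfolding bf_def by (simp add: sum_distrib_left algebra_simps)
  also have "\<dots> = (\<Sum>i<n. v $ i * (k * v $ i))"
    by (rule sum.cong[OF refl]) (use Av mult_vec_sum[OF A v] in auto)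
  also have "\<dots> = k * nsq n (\<lambda>i. v $ i)" unfolding nsq_def sum_distrib_left
    by (simp add: power2_eq_square algebra_simps)
  finally show ?thesis .
qed

lemma eigenvalue_nsd:
  assumes A: "A \<in> carrier_mat n n" and nsd: "\<And>x. bf n A x x \<le> 0"
    and ev: "eigenvalue A k"
  shows "k \<le> 0"
proof -
  from ev obtain v where v: "v \<in> carrier_vec n" "v \<noteq> 0\<^sub>v n" "A *\<^sub>v v = k \<cdot>\<^sub>v v"
    unfolding eigenvalue_def eigenvector_def using A by auto
  have "bf n A (\<lambda>i. v $ i) (\<lambda>i. v $ i) = k * nsq n (\<lambda>i. v $ i)"
    by (rule bf_kernel[OF A v(1)]) (use v in auto)
  then have "k * nsq n (\<lambda>i. v $ i) \<le> 0" using nsd by metis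
  then show ?thesis using nsq_pos_vec[OF v(1,2)] by (simp add: mult_le_0_iff)
qed

lemma charm_entry:
  assumes A: "A \<in> carrier_mat n n" and ij: "i < n" "j < n"
  shows "(- char_matrix A m) $$ (i,j) = (if i = j then m else 0) - A $$ (i,j)"
  using A ij unfolding char_matrix_def by auto

lemma bf_charm:
  assumes A: "A \<in> carrier_mat n n"
  shows "bf n (- char_matrix A m) y y = m * nsq n y - bf n A y y"
proof -
  have "bf n (- char_matrix A m) y y = (\<Sum>i<n. \<Sum>j<n. (if i = j then m * (y i * y j) else 0) - y i * y j * A $$ (i,j))"
    unfolding bf_def by (intro sum.cong refl) (auto simp: charm_entry[OF A] algebra_simps)
  also have "\<dots> = (\<Sum>i<n. m * (y i)^2) - bf n A y y"
    unfolding bf_def sum_subtractf by (simp add: power2_eq_square)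
  finally show ?thesis unfolding nsq_def sum_distrib_left .
qed

lemma symm_charm:
  assumes A: "A \<in> carrier_mat n n" "symm n A"
  shows "symm n (- char_matrix A m)"
  using assms unfolding symm_def by (auto simp: charm_entry[OF A(1)])

lemma bf_abs_bound:
  "bf n A y y \<le> (\<Sum>i<n. \<Sum>j<n. \<bar>A $$ (i,j)\<bar>) * nsq n y"
proof -
  have "bf n A y y \<le> (\<Sum>i<n. \<Sum>j<n. \<bar>A $$ (i,j)\<bar> * nsq n y)"
    unfolding bf_def
  proof (intro sum_mono)
    fix i j assume ij: "i \<in> {..<n}" "j \<in> {..<n}"
    have "y i * y j * A $$ (i,j) \<le> \<bar>y i * y j\<bar> * \<bar>A $$ (i,j)\<bar>" by (metis abs_ge_self abs_mult)
    also have "\<dots> \<le> nsq n y * \<bar>A $$ (i,j)\<bar>" using prod_le_nsq[of i n j y] ij by (intro mult_right_mono) auto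
    finally show "y i * y j * A $$ (i,j) \<le> \<bar>A $$ (i,j)\<bar> * nsq n y" by (simp add: mult.commute)
  qed
  also have "\<dots> = (\<Sum>i<n. \<Sum>j<n. \<bar>A $$ (i,j)\<bar>) * nsq n y" unfolding sum_distrib_right ..
  finally show ?thesis .
qed

lemma pos_eigenvalue:
  assumes A: "A \<in> carrier_mat n n" and sy: "symm n A" and x: "bf n A x x > 0"
  shows "\<exists>k>0. eigenvalue A k"
proof -
  define U where "U = {m::real. m \<ge> 0 \<and> (\<forall>y. bf n A y y \<le> m * nsq n y)}"
  define C where "C = (\<Sum>i<n. \<Sum>j<n. \<bar>A $$ (i,j)\<bar>)"
  have C0: "C \<ge> 0" unfolding C_def by (intro sum_nonneg) auto
  have CU: "C \<in> U" unfolding U_def C_def using bf_abs_bound C0 C_def by auto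
  have bdd: "bdd_below U" unfolding U_def by (rule bdd_belowI[of _ 0]) auto
  define m0 where "m0 = Inf U"
  have m0le: "\<And>m. m \<in> U \<Longrightarrow> m0 \<le> m" unfolding m0_def using bdd by (simp add: cInf_lower)
  have m0ge: "m0 \<ge> 0" unfolding m0_def using CU by (intro cInf_greatest) (auto simp: U_def)
  have m0U: "m0 \<in> U"
  proof -
    have "bf n A y y \<le> m0 * nsq n y" for y
    proof (rule ccontr)
      assume "\<not> ?thesis"
      then have gap: "bf n A y y > m0 * nsq n y" by simp
      have np: "nsq n y > 0"
      proof (rule ccontr)
        assume "\<not> nsq n y > 0"
        then have "nsq n y = 0" using nsq_nonneg[of n y] by simp
        moreover have "bf n A y y \<le> C * nsq n y" using CU unfolding U_def by blast
        ultimately show False using gap by simp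
      qed
      define d where "d = (bf n A y y - m0 * nsq n y) / nsq n y"
      have dpos: "d > 0" unfolding d_def using gap np by simp
      have "Inf U < m0 + d" using dpos unfolding m0_def by simp
      then obtain m where m: "m \<in> U" "m < m0 + d" using cInf_lessD[of U] CU by blast
      have "bf n A y y \<le> m * nsq n y" using m(1) unfolding U_def by auto
      also have "\<dots> < (m0 + d) * nsq n y" using m(2) np by simp
      also have "\<dots> = bf n A y y" unfolding d_def using np by (simp add: field_simps)
      finally show False by simp
    qed
    then show ?thesis unfolding U_def using m0ge by auto
  qed
  have m0pos: "m0 > 0"
  proof (rule ccontr)
    assume "\<not> m0 > 0"
    then have "m0 = 0" using m0ge by simp
    then have "bf n A x x \<le> 0 * nsq n x" using m0U unfolding U_def by blast
    then show False using x by simp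
  qed
  let ?M = "- char_matrix A m0"
  have Mc: "?M \<in> carrier_mat n n" using A unfolding char_matrix_def by auto
  have detM: "det (char_matrix A m0) = 0"
  proof (rule ccontr)
    assume d: "det (char_matrix A m0) \<noteq> 0"
    have cmc: "char_matrix A m0 \<in> carrier_mat n n" using A unfolding char_matrix_def by auto
    have d': "det ?M \<noteq> 0" using det_0_negate[OF cmc] d by simp
    have psd: "\<And>z. bf n ?M z z \<ge> 0" using m0U unfolding U_def bf_charm[OF A] by auto
    obtain c where c: "c > 0" "\<And>y. bf n ?M y y \<ge> c * nsq n y"
      using coercive[OF Mc symm_charm[OF A sy] psd d'] by blast
    define m1 where "m1 = max 0 (m0 - c)"
    have "m1 \<in> U"
    proof -
      have "bf n A y y \<le> m1 * nsq n y" for y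
      proof -
        have "bf n A y y \<le> (m0 - c) * nsq n y" using c(2)[of y] unfolding bf_charm[OF A] by (simp add: algebra_simps)
        also have "\<dots> \<le> m1 * nsq n y" unfolding m1_def using nsq_nonneg[of n y] by (intro mult_right_mono) auto
        finally show ?thesis .
      qed
      then show ?thesis unfolding U_def m1_def by auto
    qed
    then have "m0 \<le> m1" by (rule m0le)
    then show False unfolding m1_def using c(1) m0pos by simp
  qed
  have cmc: "char_matrix A m0 \<in> carrier_mat n n" using A unfolding char_matrix_def by auto
  have "eigenvalue A m0"
    using det_0_iff_vec_prod_zero_field[OF cmc] detM eigenvalue_char_matrix[OF A] by simp
  then show ?thesis using m0pos by blast
qed

lemma n_plus_zero_iff:
  assumes A: "A \<in> carrier_mat n n"
  shows "n_plus A = 0 \<longleftrightarrow> (\<forall>k>0. \<not> eigenvalue A k)"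
proof -
  let ?p = "char_poly A"
  have p0: "?p \<noteq> 0" using degree_monic_char_poly[OF A] by auto
  let ?Z = "{x. x > 0 \<and> poly ?p x = 0}"
  have finZ: "finite ?Z" using poly_roots_finite[OF p0] by (rule finite_subset[rotated]) auto
  have ord: "\<And>x. x \<in> ?Z \<Longrightarrow> order x ?p \<noteq> 0" using p0 order_root by blast
  have "n_plus A = 0 \<longleftrightarrow> ?Z = {}"
    unfolding n_plus_def using sum_eq_0_iff[OF finZ] ord by (metis (no_types, lifting) ex_in_conv)
  also have "\<dots> \<longleftrightarrow> (\<forall>k>0. \<not> eigenvalue A k)"
    using eigenvalue_root_char_poly[OF A] by auto
  finally show ?thesis .
qed


definition ind :: "nat \<times> nat \<Rightarrow> nat \<Rightarrow> real" where
  "ind cd u = (if u = fst cd then 1 else 0) - (if u = snd cd then 1 else 0)"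

lemma lc_ind: "lc cd u v = ind cd u * ind cd v"
  unfolding lc_def ind_def by auto

lemma sum_ind: "finite I \<Longrightarrow> (\<Sum>u\<in>I. y u * ind cd u) = (if fst cd \<in> I then y (fst cd) else 0) - (if snd cd \<in> I then y (snd cd) else 0)"
  unfolding ind_def by (simp add: right_diff_distrib sum_subtractf if_distrib[of "\<lambda>x. y _ * x"] sum.delta' cong: if_cong)

lemma bf_lapl:
  assumes fin: "finite (arcs H)"
  shows "bf n (mat n n (\<lambda>(i,j). lapl H i j)) y y =
     (\<Sum>g\<in>arcs H. wt H g * ((if fst (ends H g) < n then y (fst (ends H g)) else 0)
                             - (if snd (ends H g) < n then y (snd (ends H g)) else 0))^2)"
proof -
  have "bf n (mat n n (\<lambda>(i,j). lapl H i j)) y y = (\<Sum>i<n. \<Sum>j<n. y i * y j * lapl H i j)"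
    unfolding bf_def by (intro sum.cong refl) simp
  also have "\<dots> = (\<Sum>i<n. \<Sum>j<n. \<Sum>g\<in>arcs H. wt H g * (y i * ind (ends H g) i) * (y j * ind (ends H g) j))"
    unfolding lapl_def lc_ind sum_distrib_left by (simp add: algebra_simps)
  also have "\<dots> = (\<Sum>i<n. \<Sum>g\<in>arcs H. \<Sum>j<n. wt H g * (y i * ind (ends H g) i) * (y j * ind (ends H g) j))"
    by (rule sum.cong[OF refl], rule sum.swap)
  also have "\<dots> = (\<Sum>g\<in>arcs H. \<Sum>i<n. \<Sum>j<n. wt H g * (y i * ind (ends H g) i) * (y j * ind (ends H g) j))"
    by (rule sum.swap)
  also have "\<dots> = (\<Sum>g\<in>arcs H. wt H g * ((\<Sum>i<n. y i * ind (ends H g) i) * (\<Sum>j<n. y j * ind (ends H g) j)))"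
    by (rule sum.cong[OF refl]) (simp add: sum_distrib_left sum_distrib_right algebra_simps)
  also have "\<dots> = (\<Sum>g\<in>arcs H. wt H g * ((if fst (ends H g) < n then y (fst (ends H g)) else 0)
                             - (if snd (ends H g) < n then y (snd (ends H g)) else 0))^2)"
    by (rule sum.cong[OF refl]) (simp add: sum_ind power2_eq_square)
  finally show ?thesis .
qed

lemma lapl_symm: "lapl H u v = lapl H v u"
  unfolding lapl_def lc_ind by (simp add: mult.commute)

lemma det_on_lessThan: "det_on {..<n} M = det (mat n n (\<lambda>(i,j). M i j))"
proof -
  have "mat n n (\<lambda>(i,j). M ([0..<n] ! i) ([0..<n] ! j)) = mat n n (\<lambda>(i,j). M i j)"
    by (intro eq_matI) auto
  then show ?thesis unfolding det_on_def by (simp add: lessThan_atLeast0)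
qed


locale sgl =
  fixes N :: nat and gam :: "nat \<Rightarrow> nat \<Rightarrow> real" and e f :: "nat \<times> nat"
  assumes sg: "signed_graph N gam"
    and conn_pos: "connected_by (sg_graph N gam) (pos_edges N gam)"
    and neg: "neg_edges N gam = {e, f}" and ef: "e \<noteq> f"
    and disj: "{fst e, snd e} \<inter> {fst f, snd f} = {}"
begin

lemma gsym: "gam i j = gam j i" using sg unfolding signed_graph_def by auto
lemma gdiag: "gam i i = 0" using sg unfolding signed_graph_def by auto
lemma gout: "N \<le> i \<or> N \<le> j \<Longrightarrow> gam i j = 0" using sg unfolding signed_graph_def by auto

abbreviation "SG \<equiv> sg_edges N gam"
abbreviation "PE \<equiv> pos_edges N gam"
abbreviation "NE \<equiv> neg_edges N gam"

lemma sg_sub: "SG \<subseteq> {..<N} \<times> {..<N}" unfolding sg_edges_def by auto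
lemma finSG: "finite SG" using sg_sub finite_subset by blast
lemma sg_mem: "p \<in> SG \<Longrightarrow> fst p < snd p \<and> snd p < N \<and> gam (fst p) (snd p) \<noteq> 0"
  unfolding sg_edges_def by auto
lemma pe_sub: "PE \<subseteq> SG" unfolding pos_edges_def by auto
lemma ne_sub: "NE \<subseteq> SG" unfolding neg_edges_def by auto
lemma pn_disj: "PE \<inter> NE = {}" unfolding pos_edges_def neg_edges_def by auto
lemma pn_un: "SG = PE \<union> NE" unfolding pos_edges_def neg_edges_def sg_edges_def by auto
lemma finPE: "finite PE" using pe_sub finSG finite_subset by blast
lemma finNE: "finite NE" using ne_sub finSG finite_subset by blast

lemma e_in: "e \<in> SG" "gam (fst e) (snd e) < 0" using neg ne_sub unfolding neg_edges_def by auto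
lemma f_in: "f \<in> SG" "gam (fst f) (snd f) < 0" using neg ne_sub unfolding neg_edges_def by auto
lemma Npos: "N \<ge> 2" using sg_mem[OF e_in(1)] by auto

definition Ft :: "real \<Rightarrow> (nat \<Rightarrow> real) \<Rightarrow> real" where
  "Ft t x = (\<Sum>p\<in>SG. wt_t gam t (fst p) (snd p) * (x (fst p) - x (snd p))^2)"
definition Ap :: "(nat \<Rightarrow> real) \<Rightarrow> real" where
  "Ap x = (\<Sum>p\<in>PE. gam (fst p) (snd p) * (x (fst p) - x (snd p))^2)"
definition Bn :: "(nat \<Rightarrow> real) \<Rightarrow> real" where
  "Bn x = (\<Sum>p\<in>NE. - gam (fst p) (snd p) * (x (fst p) - x (snd p))^2)"

lemma Ft_split: "Ft t x = Ap x - t * Bn x"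
proof -
  have "Ft t x = (\<Sum>p\<in>PE. wt_t gam t (fst p) (snd p) * (x (fst p) - x (snd p))^2)
              + (\<Sum>p\<in>NE. wt_t gam t (fst p) (snd p) * (x (fst p) - x (snd p))^2)"
    unfolding Ft_def pn_un by (rule sum.union_disjoint[OF finPE finNE pn_disj])
  also have "(\<Sum>p\<in>PE. wt_t gam t (fst p) (snd p) * (x (fst p) - x (snd p))^2) = Ap x"
    unfolding Ap_def by (rule sum.cong[OF refl]) (auto simp: wt_t_def pos_edges_def)
  also have "(\<Sum>p\<in>NE. wt_t gam t (fst p) (snd p) * (x (fst p) - x (snd p))^2) = - t * Bn x"
    unfolding Bn_def sum_distrib_left by (rule sum.cong[OF refl]) (auto simp: wt_t_def neg_edges_def)
  finally show ?thesis by simp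
qed

lemma Ap_nonneg: "Ap x \<ge> 0"
  unfolding Ap_def by (intro sum_nonneg) (auto simp: pos_edges_def)
lemma Bn_nonneg: "Bn x \<ge> 0"
  unfolding Bn_def by (intro sum_nonneg) (auto simp: neg_edges_def mult_nonpos_nonneg)

lemma Ft_cong: "(\<And>i. i < N \<Longrightarrow> x i = x' i) \<Longrightarrow> Ft t x = Ft t x'"
  unfolding Ft_def by (intro sum.cong refl) (auto dest: sg_mem)
lemma Bn_cong: "(\<And>i. i < N \<Longrightarrow> x i = x' i) \<Longrightarrow> Bn x = Bn x'"
  unfolding Bn_def using ne_sub by (intro sum.cong refl) (auto dest!: sg_mem)
lemma Ft_shift: "Ft t (\<lambda>i. x i - c) = Ft t x" unfolding Ft_def by simp
lemma Bn_shift: "Bn (\<lambda>i. x i - c) = Bn x" unfolding Bn_def by simp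

lemma Ap_zero:
  assumes "Ap x = 0" "i < N"
  shows "x i = x (N - 1)"
proof -
  have terms: "\<And>p. p \<in> PE \<Longrightarrow> x (fst p) = x (snd p)"
  proof -
    fix p assume p: "p \<in> PE"
    have "\<forall>p\<in>PE. gam (fst p) (snd p) * (x (fst p) - x (snd p))^2 = 0"
      using assms(1) unfolding Ap_def
      by (subst sum_nonneg_eq_0_iff[OF finPE, symmetric]) (auto simp: pos_edges_def)
    then have "gam (fst p) (snd p) * (x (fst p) - x (snd p))^2 = 0" using p by blast
    moreover have "gam (fst p) (snd p) > 0" using p unfolding pos_edges_def by auto
    ultimately show "x (fst p) = x (snd p)" by simp
  qed
  have J: "joined (sg_graph N gam) PE i (N - 1)"
    using conn_pos assms(2) Npos unfolding connected_by_def sg_graph_def by auto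
  have "\<And>u v. (u,v) \<in> (adj_rel (sg_graph N gam) PE)\<^sup>* \<Longrightarrow> x u = x v"
  proof -
    fix u v assume "(u,v) \<in> (adj_rel (sg_graph N gam) PE)\<^sup>*"
    then show "x u = x v"
    proof (induction rule: rtrancl_induct)
      case base then show ?case by simp
    next
      case (step y z)
      from step.hyps(2) obtain g where "g \<in> PE" "g = (y,z) \<or> g = (z,y)"
        unfolding adj_rel_def sg_graph_def by auto
      then have "x y = x z" using terms by force
      then show ?case using step.IH by simp
    qed
  qed
  then show ?thesis using J unfolding joined_def by blast
qed

definition Kb :: real where "Kb = 4 * (\<Sum>p\<in>NE. - gam (fst p) (snd p))"

lemma Bn_bound: "Bn x \<le> Kb * nsq N x"
proof -
  have "Bn x \<le> (\<Sum>p\<in>NE. - gam (fst p) (snd p) * (4 * nsq N x))"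
    unfolding Bn_def
  proof (rule sum_mono)
    fix p assume p: "p \<in> NE"
    have g: "- gam (fst p) (snd p) \<ge> 0" using p unfolding neg_edges_def by auto
    have pS: "p \<in> SG" using p ne_sub by blast
    have ij: "fst p < N" "snd p < N" using sg_mem[OF pS] by auto
    have "(x (fst p) - x (snd p))^2 \<le> 2 * (x (fst p))^2 + 2 * (x (snd p))^2"
    proof -
      have "0 \<le> (x (fst p) + x (snd p))^2" by simp
      then show ?thesis by (simp add: power2_eq_square algebra_simps)
    qed
    also have "\<dots> \<le> 4 * nsq N x" using sq_le_nsq[OF ij(1), of x] sq_le_nsq[OF ij(2), of x] by simp
    finally show "- gam (fst p) (snd p) * (x (fst p) - x (snd p))^2 \<le> - gam (fst p) (snd p) * (4 * nsq N x)"
      using g by (intro mult_left_mono) auto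
  qed
  also have "\<dots> = Kb * nsq N x" unfolding Kb_def sum_distrib_right sum_distrib_left
    by (rule sum.cong[OF refl]) (simp add: algebra_simps)
  finally show ?thesis .
qed

lemma Kb_nonneg: "Kb \<ge> 0"
proof -
  have "(\<Sum>p\<in>NE. - gam (fst p) (snd p)) \<ge> 0" by (rule sum_nonneg) (simp add: neg_edges_def)
  then show ?thesis unfolding Kb_def by simp
qed

lemma Bn_delta: "Bn (\<lambda>i. if i = fst e then 1 else 0) \<ge> - gam (fst e) (snd e)"
proof -
  let ?x = "\<lambda>i. if i = fst e then 1 else (0::real)"
  have eN: "e \<in> NE" using neg by auto
  have ne: "fst e \<noteq> snd e" using sg_mem[OF e_in(1)] by simp
  have "- gam (fst e) (snd e) * (?x (fst e) - ?x (snd e))^2 \<le> Bn ?x"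
    unfolding Bn_def
    by (rule member_le_sum[OF eN _ finNE]) (auto simp: neg_edges_def mult_nonpos_nonneg)
  then show ?thesis using ne by simp
qed


abbreviation "W t \<equiv> wt_t gam t"

lemma W_sym: "W t u v = W t v u" unfolding wt_t_def using gsym by simp
lemma W_diag: "W t u u = 0" unfolding wt_t_def using gdiag by simp
lemma W_zero: "gam u v = 0 \<Longrightarrow> W t u v = 0" unfolding wt_t_def by simp

lemma pair_conv:
  fixes h :: "nat \<Rightarrow> nat \<Rightarrow> real"
  assumes hs: "\<And>u v. h u v = h v u" and hz: "\<And>u v. gam u v = 0 \<Longrightarrow> h u v = 0"
  shows "(\<Sum>p\<in>SG. h (fst p) (snd p)) = (1/2) * (\<Sum>u<N. \<Sum>v<N. h u v)"
proof -
  have hd: "\<And>u. h u u = 0" using hz gdiag by simp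
  have split: "\<And>u v. h u v = (if u < v then h u v else 0) + (if v < u then h u v else 0)"
  proof -
    fix u v :: nat
    show "h u v = (if u < v then h u v else 0) + (if v < u then h u v else 0)"
      using hd[of u] by (cases u v rule: linorder_cases) auto
  qed
  have "(\<Sum>u<N. \<Sum>v<N. h u v) = (\<Sum>u<N. \<Sum>v<N. (if u < v then h u v else 0)) + (\<Sum>u<N. \<Sum>v<N. (if v < u then h u v else 0))"
  proof -
    have "(\<Sum>u<N. \<Sum>v<N. h u v) = (\<Sum>u<N. \<Sum>v<N. (if u < v then h u v else 0) + (if v < u then h u v else 0))"
      using split by presburger
    then show ?thesis by (simp only: sum.distrib)
  qed
  also have "(\<Sum>u<N. \<Sum>v<N. (if v < u then h u v else 0)) = (\<Sum>v<N. \<Sum>u<N. (if v < u then h u v else 0))"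
    by (rule sum.swap)
  also have "\<dots> = (\<Sum>u<N. \<Sum>v<N. (if u < v then h u v else 0))"
    by (intro sum.cong refl) (metis hs)
  finally have two: "(\<Sum>u<N. \<Sum>v<N. h u v) = 2 * (\<Sum>u<N. \<Sum>v<N. (if u < v then h u v else 0))" by simp
  have "(\<Sum>u<N. \<Sum>v<N. (if u < v then h u v else 0)) = (\<Sum>p\<in>{..<N} \<times> {..<N}. (if fst p < snd p then h (fst p) (snd p) else 0))"
    by (simp add: sum.cartesian_product case_prod_beta')
  also have "\<dots> = (\<Sum>p\<in>SG. h (fst p) (snd p))"
  proof (rule sum.mono_neutral_cong_right)
    show "finite ({..<N} \<times> {..<N})" by simp
    show "SG \<subseteq> {..<N} \<times> {..<N}" by (rule sg_sub)
    show "\<forall>p\<in>{..<N} \<times> {..<N} - SG. (if fst p < snd p then h (fst p) (snd p) else 0) = 0"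
    proof
      fix p assume p: "p \<in> {..<N} \<times> {..<N} - SG"
      show "(if fst p < snd p then h (fst p) (snd p) else 0) = 0"
      proof (cases "fst p < snd p")
        case True
        then have "gam (fst p) (snd p) = 0" using p unfolding sg_edges_def by auto
        then show ?thesis using hz by simp
      qed simp
    qed
    show "\<And>p. p \<in> SG \<Longrightarrow> (if fst p < snd p then h (fst p) (snd p) else 0) = h (fst p) (snd p)"
      using sg_mem by simp
  qed
  finally show ?thesis using two by simp
qed

abbreviation "LT t \<equiv> laplacian_t N gam t"

lemma LT_carrier: "LT t \<in> carrier_mat N N" unfolding laplacian_t_def by simp

lemma LT_entry: "u < N \<Longrightarrow> v < N \<Longrightarrow> LT t $$ (u,v) = W t u v - (if u = v then (\<Sum>k<N. W t u k) else 0)"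
  unfolding laplacian_t_def using W_diag by simp

lemma LT_symm: "symm N (LT t)"
  unfolding symm_def using LT_entry W_sym by simp

lemma bf_LT: "bf N (LT t) x x = - Ft t x"
proof -
  have rs: "(\<Sum>u<N. \<Sum>v<N. W t u v * (x v)^2) = (\<Sum>u<N. \<Sum>v<N. W t u v * (x u)^2)"
  proof -
    have "(\<Sum>u<N. \<Sum>v<N. W t u v * (x v)^2) = (\<Sum>v<N. \<Sum>u<N. W t u v * (x v)^2)" by (rule sum.swap)
    also have "\<dots> = (\<Sum>u<N. \<Sum>v<N. W t u v * (x u)^2)" using W_sym by simp
    finally show ?thesis .
  qed
  have "bf N (LT t) x x = (\<Sum>u<N. (\<Sum>v<N. x u * x v * W t u v) - (x u)^2 * (\<Sum>k<N. W t u k))"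
    unfolding bf_def
  proof (rule sum.cong[OF refl])
    fix u assume u: "u \<in> {..<N}"
    have "(\<Sum>v<N. x u * x v * LT t $$ (u,v)) = (\<Sum>v<N. x u * x v * W t u v - (if u = v then x u * x u * (\<Sum>k<N. W t u k) else 0))"
      by (rule sum.cong[OF refl]) (use u in \<open>auto simp: LT_entry algebra_simps\<close>)
    also have "\<dots> = (\<Sum>v<N. x u * x v * W t u v) - (x u)^2 * (\<Sum>k<N. W t u k)"
      using u by (simp add: sum_subtractf power2_eq_square)
    finally show "(\<Sum>v<N. x u * x v * LT t $$ (u,v)) = (\<Sum>v<N. x u * x v * W t u v) - (x u)^2 * (\<Sum>k<N. W t u k)" .
  qed
  also have "\<dots> = (\<Sum>u<N. \<Sum>v<N. x u * x v * W t u v) - (\<Sum>u<N. \<Sum>v<N. W t u v * (x u)^2)"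
    by (simp add: sum_subtractf sum_distrib_left algebra_simps)
  also have "\<dots> = - ((1/2) * (\<Sum>u<N. \<Sum>v<N. W t u v * (x u - x v)^2))"
  proof -
    have "(\<Sum>u<N. \<Sum>v<N. W t u v * (x u - x v)^2)
        = (\<Sum>u<N. \<Sum>v<N. W t u v * (x u)^2) + (\<Sum>u<N. \<Sum>v<N. W t u v * (x v)^2) - 2 * (\<Sum>u<N. \<Sum>v<N. x u * x v * W t u v)"
      by (simp add: power2_diff sum.distrib sum_subtractf sum_distrib_left algebra_simps)
    then show ?thesis using rs by (simp add: field_simps)
  qed
  also have "(1/2) * (\<Sum>u<N. \<Sum>v<N. W t u v * (x u - x v)^2) = Ft t x"
    unfolding Ft_def by (rule pair_conv[symmetric]) (auto simp: W_sym W_zero power2_commute)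
  finally show ?thesis .
qed


abbreviation "GT t \<equiv> sg_graph_t N gam t"
abbreviation "nn \<equiv> N - 1"
definition Rm :: "real \<Rightarrow> real mat" where
  "Rm t = mat nn nn (\<lambda>(i,j). lapl (GT t) i j)"

lemma GT_simps: "verts (GT t) = {..<N}" "arcs (GT t) = SG" "ends (GT t) = id"
  "wt (GT t) = (\<lambda>(i,j). wt_t gam t i j)"
  unfolding sg_graph_t_def sg_graph_def by simp_all

lemma wfg_GT: "wfg (GT t)"
  unfolding wfg_def GT_simps using finSG sg_sub by auto

lemma tree_Rm: "tree_sum (GT t) = det (Rm t)"
proof -
  have r: "N - 1 \<in> verts (GT t)" using Npos unfolding GT_simps by simp
  have v: "verts (GT t) - {N - 1} = {..<nn}" unfolding GT_simps using Npos by auto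
  show ?thesis using matrix_tree[OF wfg_GT r] unfolding v det_on_lessThan Rm_def .
qed

definition ext :: "(nat \<Rightarrow> real) \<Rightarrow> nat \<Rightarrow> real" where
  "ext y i = (if i < nn then y i else 0)"

lemma bf_Rm: "bf nn (Rm t) y y = Ft t (ext y)"
  unfolding Rm_def bf_lapl[OF wfg_GT[unfolded wfg_def, THEN conjunct2, THEN conjunct1]]
  unfolding GT_simps Ft_def ext_def id_def by (simp add: case_prod_beta')

lemma Rm_carrier: "Rm t \<in> carrier_mat nn nn" unfolding Rm_def by simp

lemma Rm_symm: "symm nn (Rm t)" unfolding symm_def Rm_def by (auto intro: lapl_symm)

lemma nplus_iff: "n_plus (LT t) = 0 \<longleftrightarrow> (\<forall>x. Ft t x \<ge> 0)"
proof
  assume np: "n_plus (LT t) = 0"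
  show "\<forall>x. Ft t x \<ge> 0"
  proof (rule ccontr)
    assume "\<not> (\<forall>x. Ft t x \<ge> 0)"
    then obtain x where "Ft t x < 0" by (meson not_le)
    then have "bf N (LT t) x x > 0" unfolding bf_LT by simp
    from pos_eigenvalue[OF LT_carrier LT_symm this] obtain k where "k > 0" "eigenvalue (LT t) k" by blast
    then show False using np n_plus_zero_iff[OF LT_carrier] by blast
  qed
next
  assume psd: "\<forall>x. Ft t x \<ge> 0"
  have nsd: "\<And>x. bf N (LT t) x x \<le> 0" unfolding bf_LT using psd by simp
  show "n_plus (LT t) = 0"
  proof (subst n_plus_zero_iff[OF LT_carrier], intro allI impI notI)
    fix k :: real assume "k > 0" "eigenvalue (LT t) k"
    then show False using eigenvalue_nsd[OF LT_carrier nsd] by fastforce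
  qed
qed

lemma kernel_Rm:
  assumes "det (Rm t) = 0"
  shows "\<exists>z. Ft t z = 0 \<and> z (N - 1) = 0 \<and> (\<exists>i<N. z i \<noteq> 0)"
proof -
  from assms det_0_iff_vec_prod_zero_field[OF Rm_carrier] obtain v where
    v: "v \<in> carrier_vec nn" "v \<noteq> 0\<^sub>v nn" "Rm t *\<^sub>v v = 0\<^sub>v nn" by blast
  have "nsq nn (\<lambda>i. v $ i) > 0" by (rule nsq_pos_vec[OF v(1,2)])
  then obtain i where i: "i < nn" "v $ i \<noteq> 0" unfolding nsq_def
    by (metis (no_types, lifting) lessThan_iff less_irrefl power_zero_numeral sum.neutral)
  have "bf nn (Rm t) (\<lambda>i. v $ i) (\<lambda>i. v $ i) = 0 * nsq nn (\<lambda>i. v $ i)"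
    by (rule bf_kernel[OF Rm_carrier v(1)]) (use v(3) in simp)
  then have "Ft t (ext (\<lambda>i. v $ i)) = 0" unfolding bf_Rm by simp
  moreover have "ext (\<lambda>i. v $ i) (N - 1) = 0" unfolding ext_def by simp
  moreover have "ext (\<lambda>i. v $ i) i \<noteq> 0" "i < N" using i unfolding ext_def by auto
  ultimately show ?thesis by blast
qed

lemma nsq_ext: "nsq N (ext y) = nsq nn y"
proof -
  have N: "{..<N} = insert nn {..<nn}" using Npos by (metis Suc_diff_1 lessThan_Suc less_le_trans pos2)
  have "nsq N (ext y) = (ext y nn)^2 + (\<Sum>i<nn. (ext y i)^2)" unfolding nsq_def N by simp
  also have "\<dots> = (\<Sum>i<nn. (y i)^2)" unfolding ext_def by simp
  finally show ?thesis unfolding nsq_def .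
qed

lemma extend:
  assumes psd: "\<forall>x. Ft t x \<ge> 0" and d: "det (Rm t) \<noteq> 0"
  shows "\<exists>d>0. \<forall>x. Ft (t + d) x \<ge> 0"
proof -
  have psd': "\<And>y. bf nn (Rm t) y y \<ge> 0" unfolding bf_Rm using psd by simp
  obtain c where c: "c > 0" "\<And>y. bf nn (Rm t) y y \<ge> c * nsq nn y"
    using coercive[OF Rm_carrier Rm_symm psd' d] by blast
  define d where "d = c / (Kb + 1)"
  have dpos: "d > 0" unfolding d_def using c Kb_nonneg by simp
  have dK: "d * Kb \<le> c" unfolding d_def using c Kb_nonneg by (simp add: field_simps)
  show ?thesis
  proof (intro exI[of _ d] conjI allI)
    show "d > 0" by (rule dpos)
    fix x :: "nat \<Rightarrow> real"
    define z where "z i = x i - x (N - 1)" for i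
    have ez: "\<And>i. i < N \<Longrightarrow> ext z i = z i"
    proof -
      fix i assume i: "i < N"
      show "ext z i = z i"
      proof (cases "i < nn")
        case False
        then have "i = N - 1" using i by simp
        then show ?thesis unfolding ext_def z_def by simp
      qed (simp add: ext_def)
    qed
    have F0: "Ft t (ext z) = Ft t z" by (rule Ft_cong) (simp add: ez)
    have B0: "Bn (ext z) = Bn z" by (rule Bn_cong) (simp add: ez)
    have F1: "Ft t x = Ft t (ext z)" using Ft_shift[of t x "x (N - 1)"] F0 unfolding z_def by simp
    have B1: "Bn x = Bn (ext z)" using Bn_shift[of x "x (N - 1)"] B0 unfolding z_def by simp
    have "Ft t x \<ge> c * nsq nn z" using c(2)[of z] unfolding F1 bf_Rm .
    moreover have "Bn x \<le> Kb * nsq nn z" using Bn_bound[of "ext z"] unfolding B1 nsq_ext .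
    moreover have "nsq nn z \<ge> 0" by (rule nsq_nonneg)
    ultimately have A1: "Ft t x - d * Bn x \<ge> c * nsq nn z - d * (Kb * nsq nn z)"
      using dpos by (smt (verit) mult_left_mono)
    have A2: "c * nsq nn z - d * (Kb * nsq nn z) = (c - d * Kb) * nsq nn z" by (simp add: algebra_simps)
    have A3: "(c - d * Kb) * nsq nn z \<ge> 0" using dK nsq_nonneg[of nn z] by simp
    have "Ft t x - d * Bn x \<ge> 0" using A1 A2 A3 by linarith
    then show "Ft (t + d) x \<ge> 0" unfolding Ft_split by (simp add: algebra_simps)
  qed
qed

end


lemma struct_delete:
  assumes "verts H = verts G" "arcs H = arcs G" "ends H = ends G"
  shows "verts (delete_edge H e) = verts (delete_edge G e)" "arcs (delete_edge H e) = arcs (delete_edge G e)"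
    "ends (delete_edge H e) = ends (delete_edge G e)" "wt (delete_edge H e) = wt H"
  using assms unfolding delete_edge_def by simp_all

lemma struct_contract:
  assumes "verts H = verts G" "arcs H = arcs G" "ends H = ends G"
  shows "verts (contract_edge H e) = verts (contract_edge G e)" "arcs (contract_edge H e) = arcs (contract_edge G e)"
    "ends (contract_edge H e) = ends (contract_edge G e)" "wt (contract_edge H e) = wt H"
proof -
  have "cm H e = cm G e" unfolding cm_def using assms(3) by (simp add: fun_eq_iff)
  then show "verts (contract_edge H e) = verts (contract_edge G e)" "arcs (contract_edge H e) = arcs (contract_edge G e)"
    "ends (contract_edge H e) = ends (contract_edge G e)" "wt (contract_edge H e) = wt H"
    using assms unfolding contract_simps by simp_all
qed

context sgl begin

abbreviation "GG \<equiv> sg_graph N gam"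

lemma GG_struct: "verts (GT t) = verts GG" "arcs (GT t) = arcs GG" "ends (GT t) = ends GG"
  unfolding sg_graph_t_def by simp_all

lemma GG_wt: "wt GG = (\<lambda>(i,j). gam i j)" unfolding sg_graph_def by simp

lemma pe_eq: "SG - {e} - {f} = PE" using pn_un neg pn_disj by auto

lemma wt_pe: "p \<in> PE \<Longrightarrow> wt (GT t) p = wt GG p"
  unfolding GT_simps GG_wt by (auto simp: wt_t_def pos_edges_def case_prod_beta)

lemma wt_rest: "p \<in> arcs (GT t) \<Longrightarrow> p \<noteq> e \<Longrightarrow> p \<noteq> f \<Longrightarrow> wt (GT t) p = wt GG p"
  using wt_pe pe_eq unfolding GT_simps by blast

lemma tree_p:
  "tree_sum (GT t) =
     tree_sum (delete_edge (delete_edge GG e) f)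
     + t * gam (fst f) (snd f) * tree_sum (contract_edge (delete_edge GG e) f)
     + t * gam (fst e) (snd e) * (tree_sum (delete_edge (contract_edge GG e) f)
         + t * gam (fst f) (snd f) * tree_sum (contract_edge (contract_edge GG e) f))"
proof -
  let ?H = "GT t"
  have eS: "e \<in> arcs ?H" using e_in unfolding GT_simps by simp
  have fS: "f \<in> SG - {e}" using f_in ef by simp
  have enl: "fst (ends ?H e) \<noteq> snd (ends ?H e)" using sg_mem[OF e_in(1)] unfolding GT_simps by simp
  have fnl: "fst f \<noteq> snd f" using sg_mem[OF f_in(1)] by simp
  have finH: "finite (arcs ?H)" unfolding GT_simps by (rule finSG)
  have wte: "wt ?H e = t * gam (fst e) (snd e)" unfolding GT_simps using e_in(2) by (simp add: wt_t_def case_prod_beta)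
  have wtf: "wt ?H f = t * gam (fst f) (snd f)" unfolding GT_simps using f_in(2) by (simp add: wt_t_def case_prod_beta)
  have 1: "tree_sum ?H = tree_sum (delete_edge ?H e) + wt ?H e * tree_sum (contract_edge ?H e)"
    by (rule tree_sum_dc[OF finH eS enl])
  have 2: "tree_sum (delete_edge ?H e) = tree_sum (delete_edge (delete_edge ?H e) f)
      + wt (delete_edge ?H e) f * tree_sum (contract_edge (delete_edge ?H e) f)"
    by (rule tree_sum_dc) (use finSG fS fnl in \<open>simp_all add: delete_edge_def GT_simps\<close>)
  have cmf: "\<And>v. v \<in> {fst f, snd f} \<Longrightarrow> cm ?H e v = v" unfolding cm_def GT_simps using disj by auto
  have endsf: "ends (contract_edge ?H e) f = f"
    unfolding contract_simps using cmf by (simp add: GT_simps map_prod_def case_prod_beta)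
  have 3: "tree_sum (contract_edge ?H e) = tree_sum (delete_edge (contract_edge ?H e) f)
      + wt (contract_edge ?H e) f * tree_sum (contract_edge (contract_edge ?H e) f)"
    by (rule tree_sum_dc) (use finSG fS fnl endsf in \<open>simp_all add: contract_simps GT_simps\<close>)
  have w2: "wt (delete_edge ?H e) f = wt ?H f" unfolding delete_edge_def by simp
  have w3: "wt (contract_edge ?H e) f = wt ?H f" unfolding contract_simps by simp
  note S = GG_struct[of t]
  have c1: "tree_sum (delete_edge (delete_edge ?H e) f) = tree_sum (delete_edge (delete_edge GG e) f)"
  proof (rule tree_sum_cong)
    show "verts (delete_edge (delete_edge ?H e) f) = verts (delete_edge (delete_edge GG e) f)"
      "arcs (delete_edge (delete_edge ?H e) f) = arcs (delete_edge (delete_edge GG e) f)"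
      "ends (delete_edge (delete_edge ?H e) f) = ends (delete_edge (delete_edge GG e) f)"
      using S by (simp_all add: delete_edge_def)
    fix p assume "p \<in> arcs (delete_edge (delete_edge ?H e) f)"
    then have "p \<in> arcs ?H" "p \<noteq> e" "p \<noteq> f" by (simp_all add: delete_edge_def)
    then show "wt (delete_edge (delete_edge ?H e) f) p = wt (delete_edge (delete_edge GG e) f) p"
      using wt_rest by (simp add: delete_edge_def)
  qed
  have c2: "tree_sum (contract_edge (delete_edge ?H e) f) = tree_sum (contract_edge (delete_edge GG e) f)"
  proof (rule tree_sum_cong)
    show "verts (contract_edge (delete_edge ?H e) f) = verts (contract_edge (delete_edge GG e) f)"
      "arcs (contract_edge (delete_edge ?H e) f) = arcs (contract_edge (delete_edge GG e) f)"
      "ends (contract_edge (delete_edge ?H e) f) = ends (contract_edge (delete_edge GG e) f)"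
      using struct_contract[OF struct_delete(1-3)[OF S]] by simp_all
    fix p assume "p \<in> arcs (contract_edge (delete_edge ?H e) f)"
    then have "p \<in> arcs ?H" "p \<noteq> e" "p \<noteq> f" by (simp_all add: delete_edge_def contract_simps)
    then show "wt (contract_edge (delete_edge ?H e) f) p = wt (contract_edge (delete_edge GG e) f) p"
      using wt_rest by (simp add: delete_edge_def contract_simps)
  qed
  have c3: "tree_sum (delete_edge (contract_edge ?H e) f) = tree_sum (delete_edge (contract_edge GG e) f)"
  proof (rule tree_sum_cong)
    show "verts (delete_edge (contract_edge ?H e) f) = verts (delete_edge (contract_edge GG e) f)"
      "arcs (delete_edge (contract_edge ?H e) f) = arcs (delete_edge (contract_edge GG e) f)"
      "ends (delete_edge (contract_edge ?H e) f) = ends (delete_edge (contract_edge GG e) f)"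
      using struct_delete[OF struct_contract(1-3)[OF S]] by simp_all
    fix p assume "p \<in> arcs (delete_edge (contract_edge ?H e) f)"
    then have "p \<in> arcs ?H" "p \<noteq> e" "p \<noteq> f" by (simp_all add: delete_edge_def contract_simps)
    then show "wt (delete_edge (contract_edge ?H e) f) p = wt (delete_edge (contract_edge GG e) f) p"
      using wt_rest by (simp add: delete_edge_def contract_simps)
  qed
  have c4: "tree_sum (contract_edge (contract_edge ?H e) f) = tree_sum (contract_edge (contract_edge GG e) f)"
  proof (rule tree_sum_cong)
    show "verts (contract_edge (contract_edge ?H e) f) = verts (contract_edge (contract_edge GG e) f)"
      "arcs (contract_edge (contract_edge ?H e) f) = arcs (contract_edge (contract_edge GG e) f)"
      "ends (contract_edge (contract_edge ?H e) f) = ends (contract_edge (contract_edge GG e) f)"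
      using struct_contract[OF struct_contract(1-3)[OF S]] by simp_all
    fix p assume "p \<in> arcs (contract_edge (contract_edge ?H e) f)"
    then have "p \<in> arcs ?H" "p \<noteq> e" "p \<noteq> f" by (simp_all add: contract_simps)
    then show "wt (contract_edge (contract_edge ?H e) f) p = wt (contract_edge (contract_edge GG e) f) p"
      using wt_rest by (simp add: contract_simps)
  qed
  show ?thesis using 1 2 3 w2 w3 wte wtf c1 c2 c3 c4 by (simp add: algebra_simps)
qed

end


context sgl begin

definition SS where "SS = {t. t \<ge> 0 \<and> n_plus (LT t) = 0}"

lemma SS_char: "SS = {t. t \<ge> 0 \<and> (\<forall>x. Ap x - t * Bn x \<ge> 0)}"
  unfolding SS_def using nplus_iff Ft_split by simp

lemma SS_bdd: "bdd_above SS"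
proof -
  let ?x = "\<lambda>i. if i = fst e then 1 else (0::real)"
  have Bp: "Bn ?x > 0" using Bn_delta e_in(2) by linarith
  show ?thesis
  proof (rule bdd_aboveI[of _ "Ap ?x / Bn ?x"])
    fix t assume "t \<in> SS"
    then have "Ap ?x - t * Bn ?x \<ge> 0" unfolding SS_char by blast
    then show "t \<le> Ap ?x / Bn ?x" using Bp by (simp add: field_simps)
  qed
qed

lemma zero_SS: "0 \<in> SS" unfolding SS_char using Ap_nonneg by simp

definition ts where "ts = Sup SS"

lemma ts_eq: "t_star N gam = ts" unfolding t_star_def ts_def SS_def ..

lemma ts_nonneg: "ts \<ge> 0" unfolding ts_def using zero_SS SS_bdd by (simp add: cSup_upper)

lemma le_ts: "t \<in> SS \<Longrightarrow> t \<le> ts" unfolding ts_def using SS_bdd by (simp add: cSup_upper)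

lemma ts_SS: "\<forall>x. Ap x - ts * Bn x \<ge> 0"
proof
  fix x
  show "Ap x - ts * Bn x \<ge> 0"
  proof (cases "Bn x = 0")
    case True then show ?thesis using Ap_nonneg by simp
  next
    case False
    then have Bp: "Bn x > 0" using Bn_nonneg[of x] by simp
    show ?thesis
    proof (rule ccontr)
      assume "\<not> ?thesis"
      then have "Ap x / Bn x < ts" using Bp by (simp add: field_simps)
      then obtain t where t: "t \<in> SS" "Ap x / Bn x < t" unfolding ts_def using less_cSupD[of SS] zero_SS by blast
      then have "Ap x - t * Bn x \<ge> 0" unfolding SS_char by blast
      then show False using t(2) Bp by (simp add: field_simps)
    qed
  qed
qed

lemma det_nonzero: "0 \<le> t \<Longrightarrow> t < ts \<or> t = 0 \<Longrightarrow> det (Rm t) \<noteq> 0"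
proof
  assume t: "0 \<le> t" "t < ts \<or> t = 0" and d: "det (Rm t) = 0"
  from kernel_Rm[OF d] obtain z i where z: "Ft t z = 0" "z (N - 1) = 0" "i < N" "z i \<noteq> 0" by blast
  have A: "Ap z - t * Bn z = 0" using z(1) Ft_split by simp
  have "Ap z = 0"
    using t(2)
  proof
    assume "t < ts"
    have "Ap z - ts * Bn z \<ge> 0" using ts_SS by blast
    then have "(t - ts) * Bn z \<ge> 0" using A by (simp add: algebra_simps)
    moreover have "t - ts < 0" using \<open>t < ts\<close> by simp
    ultimately have "Bn z \<le> 0" by (simp add: zero_le_mult_iff)
    then have "Bn z = 0" using Bn_nonneg[of z] by simp
    then show "Ap z = 0" using A by simp
  next
    assume "t = 0" then show "Ap z = 0" using A by simp
  qed
  then have "z i = z (N - 1)" using Ap_zero z(3) by blast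
  then show False using z by simp
qed

lemma ts_pos: "ts > 0"
proof -
  have psd: "\<forall>x. Ft 0 x \<ge> 0" using Ft_split Ap_nonneg by simp
  obtain d where d: "d > 0" "\<forall>x. Ft (0 + d) x \<ge> 0" using extend[OF psd det_nonzero[of 0]] by auto
  have "\<forall>x. Ap x - d * Bn x \<ge> 0" using d(2) unfolding Ft_split by simp
  then have "d \<in> SS" unfolding SS_char using d(1) by simp
  then have "d \<le> ts" by (rule le_ts)
  then show ?thesis using d(1) by simp
qed

lemma det_ts: "det (Rm ts) = 0"
proof (rule ccontr)
  assume dn: "det (Rm ts) \<noteq> 0"
  have psd: "\<forall>x. Ft ts x \<ge> 0" using ts_SS Ft_split by simp
  obtain d where d: "d > 0" "\<forall>x. Ft (ts + d) x \<ge> 0" using extend[OF psd dn] by auto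
  have "\<forall>x. Ap x - (ts + d) * Bn x \<ge> 0" using d(2) unfolding Ft_split by simp
  then have "ts + d \<in> SS" unfolding SS_char using d(1) ts_nonneg by simp
  then have "ts + d \<le> ts" by (rule le_ts)
  then show False using d(1) by simp
qed

end

theorem mainTheorem10:
  fixes N :: nat and gam :: "nat \<Rightarrow> nat \<Rightarrow> real" and e f :: "nat \<times> nat"
  assumes sg: "signed_graph N gam"
    and conn: "connected_by (sg_graph N gam) (sg_edges N gam)"
    and conn_pos: "connected_by (sg_graph N gam) (pos_edges N gam)"
    and neg: "neg_edges N gam = {e, f}" and ef: "e \<noteq> f"
    and disj: "{fst e, snd e} \<inter> {fst f, snd f} = {}"
  defines "G \<equiv> sg_graph N gam"
    and "ge \<equiv> gam (fst e) (snd e)" and "gf \<equiv> gam (fst f) (snd f)"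
  defines "p \<equiv> (\<lambda>t::real. t^2 * \<bar>ge * gf\<bar> * tree_sum (contract_edge (contract_edge G e) f)
              - t * (\<bar>ge\<bar> * tree_sum (delete_edge (contract_edge G e) f)
                     + \<bar>gf\<bar> * tree_sum (contract_edge (delete_edge G e) f))
              + tree_sum (delete_edge (delete_edge G e) f))"
  shows "(\<forall>t. tree_sum (sg_graph_t N gam t) = p t)
     \<and> bdd_above {t. t \<ge> 0 \<and> n_plus (laplacian_t N gam t) = 0}
     \<and> t_star N gam > 0 \<and> p (t_star N gam) = 0
     \<and> (\<forall>s>0. p s = 0 \<longrightarrow> t_star N gam \<le> s)"
proof -
  interpret sgl N gam e f using sg conn_pos neg ef disj by unfold_locales
  have ge: "ge < 0" unfolding ge_def using e_in(2) .
  have gf: "gf < 0" unfolding gf_def using f_in(2) .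
  have P: "\<And>t. tree_sum (sg_graph_t N gam t) = p t"
  proof -
    fix t
    have a1: "\<bar>ge * gf\<bar> = ge * gf" using ge gf by (simp add: abs_mult)
    have a2: "\<bar>ge\<bar> = - ge" "\<bar>gf\<bar> = - gf" using ge gf by simp_all
    show "tree_sum (sg_graph_t N gam t) = p t"
      unfolding tree_p p_def a1 a2 G_def ge_def[symmetric] gf_def[symmetric]
      by (simp add: algebra_simps power2_eq_square)
  qed
  have PD: "\<And>t. p t = det (Rm t)" using P tree_Rm by metis
  show ?thesis
  proof (intro conjI allI impI)
    show "\<And>t. tree_sum (sg_graph_t N gam t) = p t" by (rule P)
    show "bdd_above {t. t \<ge> 0 \<and> n_plus (laplacian_t N gam t) = 0}" using SS_bdd unfolding SS_def .
    show "t_star N gam > 0" unfolding ts_eq by (rule ts_pos)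
    show "p (t_star N gam) = 0" unfolding ts_eq PD by (rule det_ts)
    fix s :: real assume s: "s > 0" "p s = 0"
    show "t_star N gam \<le> s"
    proof (rule ccontr)
      assume "\<not> t_star N gam \<le> s"
      then have "s < ts" unfolding ts_eq by simp
      then have "det (Rm s) \<noteq> 0" using det_nonzero s(1) by simp
      then show False using s(2) PD by simp
    qed
  qed
qed


end
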